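(* The projective Fraïssé limit $\mathbb G$ is pointwise self-isomorphic: for every vertex $x$ of $\mathbb G$ and every neighborhood $U$ of $x$ there is a topological subgraph $V$ of $\mathbb G$ with $x\in V\subseteq U$ that is isomorphic to $\mathbb G$.
   Context: A graph is a pair $A=(V(A),E(A))$ with $E(A)\subseteq V(A)^2$ reflexive and symmetric; a topological graph additionally has $V$ compact, second countable, zero-dimensional and $E$ closed; subgraphs carry the induced edge relation. Epimorphisms are (continuous) edge-preserving maps surjective on vertices and edges; an isomorphism is an injective epimorphism. A vertex set $S$ is disconnected if it splits into two nonempty closed subsets with no edges between them; otherwise connected; components are maximal connected subsets. An epimorphism $f\colon A\to B$ is confluent if for every connected $Q\subseteq V(B)$ each component $C$ of $f^{-1}(Q)$ has $f(C)=Q$. $\mathbb G$ is the projective Fraïssé limit of the class of finite connected graphs with confluent epimorphisms: the unique topological graph such that (1) every finite connected graph is a confluent epimorphic image of $\mathbb G$; (2) for finite connected $A,B$ and confluent epimorphisms $f\colon\mathbb G\to A$, $g\colon B\to A$ there is a confluent epimorphism $h\colon\mathbb G\to B$ with $f=g\circ h$; (3) for each $\varepsilon>0$ some confluent epimorphism from $\mathbb G$ onto a finite connected graph has all point-preimages of diameter $<\varepsilon$. *)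

theory Defs
  imports "HOL-Analysis.Analysis"
begin

definition graph :: "'a set \<Rightarrow> ('a \<times> 'a) set \<Rightarrow> bool" where
  "graph V E \<longleftrightarrow> E \<subseteq> V \<times> V \<and> (\<forall>v\<in>V. (v, v) \<in> E) \<and> (\<forall>a b. (a, b) \<in> E \<longrightarrow> (b, a) \<in> E)"

definition zero_dim :: "'a topology \<Rightarrow> bool" where
  "zero_dim X \<longleftrightarrow> (\<forall>x U. openin X U \<and> x \<in> U \<longrightarrow>
      (\<exists>C. openin X C \<and> closedin X C \<and> x \<in> C \<and> C \<subseteq> U))"

text \<open>Topological graph, realised on a subset of a metric space (so that diameters make sense).\<close>
definition topological_graph :: "'a::metric_space set \<Rightarrow> ('a \<times> 'a) set \<Rightarrow> bool" where
  "topological_graph V E \<longleftrightarrow> graph V E \<and> compact V \<and> second_countable (top_of_set V)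
     \<and> zero_dim (top_of_set V) \<and> closed E"

definition gconnected :: "'a topology \<Rightarrow> ('a \<times> 'a) set \<Rightarrow> 'a set \<Rightarrow> bool" where
  "gconnected X E S \<longleftrightarrow> \<not> (\<exists>A B. closedin (subtopology X S) A \<and> closedin (subtopology X S) B
      \<and> A \<noteq> {} \<and> B \<noteq> {} \<and> A \<union> B = S \<and> A \<inter> B = {}
      \<and> (\<forall>a\<in>A. \<forall>b\<in>B. (a, b) \<notin> E))"

definition gcomponent :: "'a topology \<Rightarrow> ('a \<times> 'a) set \<Rightarrow> 'a set \<Rightarrow> 'a set \<Rightarrow> bool" where
  "gcomponent X E P C \<longleftrightarrow> C \<subseteq> P \<and> gconnected X E C
      \<and> (\<forall>D. C \<subseteq> D \<and> D \<subseteq> P \<and> gconnected X E D \<longrightarrow> D = C)"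

definition epimorphism :: "'a topology \<Rightarrow> ('a \<times> 'a) set \<Rightarrow> 'b topology \<Rightarrow> ('b \<times> 'b) set
    \<Rightarrow> ('a \<Rightarrow> 'b) \<Rightarrow> bool" where
  "epimorphism X EA Y EB f \<longleftrightarrow> continuous_map X Y f \<and> f ` topspace X = topspace Y
     \<and> (\<forall>a b. (a, b) \<in> EA \<longrightarrow> (f a, f b) \<in> EB)
     \<and> (\<lambda>(a, b). (f a, f b)) ` EA = EB"

definition isomorphism :: "'a topology \<Rightarrow> ('a \<times> 'a) set \<Rightarrow> 'b topology \<Rightarrow> ('b \<times> 'b) set
    \<Rightarrow> ('a \<Rightarrow> 'b) \<Rightarrow> bool" where
  "isomorphism X EA Y EB f \<longleftrightarrow> epimorphism X EA Y EB f \<and> inj_on f (topspace X)"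

definition confluent :: "'a topology \<Rightarrow> ('a \<times> 'a) set \<Rightarrow> 'b topology \<Rightarrow> ('b \<times> 'b) set
    \<Rightarrow> ('a \<Rightarrow> 'b) \<Rightarrow> bool" where
  "confluent X EA Y EB f \<longleftrightarrow> epimorphism X EA Y EB f \<and>
     (\<forall>Q. Q \<subseteq> topspace Y \<and> gconnected Y EB Q \<longrightarrow>
        (\<forall>C. gcomponent X EA (topspace X \<inter> f -` Q) C \<longrightarrow> f ` C = Q))"

text \<open>Finite (nonempty) connected graphs; vertices taken in nat (every finite graph is isomorphic
  to one of these), with the discrete topology.\<close>
definition finite_connected_graph :: "nat set \<Rightarrow> (nat \<times> nat) set \<Rightarrow> bool" where
  "finite_connected_graph V E \<longleftrightarrow> finite V \<and> V \<noteq> {} \<and> graph V E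
     \<and> gconnected (discrete_topology V) E V"

text \<open>The characterisation (1)-(3) of the projective Fraisse limit of finite connected graphs
  with confluent epimorphisms.\<close>
definition is_Fraisse_limit :: "'a::metric_space set \<Rightarrow> ('a \<times> 'a) set \<Rightarrow> bool" where
  "is_Fraisse_limit V E \<longleftrightarrow> topological_graph V E
   \<and> (\<forall>VA EA. finite_connected_graph VA EA \<longrightarrow>
        (\<exists>f. confluent (top_of_set V) E (discrete_topology VA) EA f))
   \<and> (\<forall>VA EA VB EB f g. finite_connected_graph VA EA \<and> finite_connected_graph VB EB
        \<and> confluent (top_of_set V) E (discrete_topology VA) EA f
        \<and> confluent (discrete_topology VB) EB (discrete_topology VA) EA g \<longrightarrow>
        (\<exists>h. confluent (top_of_set V) E (discrete_topology VB) EB h \<and> (\<forall>x\<in>V. f x = g (h x))))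
   \<and> (\<forall>\<epsilon>>0. \<exists>VA EA f. finite_connected_graph VA EA
        \<and> confluent (top_of_set V) E (discrete_topology VA) EA f
        \<and> (\<forall>a\<in>VA. diameter (V \<inter> f -` {a}) < \<epsilon>))"

end

theory Submission
  imports Defs
begin

lemma gconnected_singleton: "gconnected X E {v}"
proof -
  have "\<not> (A \<noteq> {} \<and> B \<noteq> {} \<and> A \<union> B = {v} \<and> A \<inter> B = {})" for A B :: "'a set"
  proof
    assume h: "A \<noteq> {} \<and> B \<noteq> {} \<and> A \<union> B = {v} \<and> A \<inter> B = {}"
    then show False by (auto simp: Un_singleton_iff)
  qed
  then show ?thesis unfolding gconnected_def by blast
qed

lemma gconnected_empty: "gconnected X E {}"
  unfolding gconnected_def by blast

lemma gconnected_Union: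
  assumes conn: "\<And>T. T \<in> F \<Longrightarrow> gconnected X E T" and v: "\<And>T. T \<in> F \<Longrightarrow> v \<in> T"
  shows "gconnected X E (\<Union>F)"
proof (rule ccontr)
  assume "\<not> gconnected X E (\<Union>F)"
  then obtain A B where A: "closedin (subtopology X (\<Union>F)) A" and B: "closedin (subtopology X (\<Union>F)) B"
    and ne: "A \<noteq> {}" "B \<noteq> {}" and un: "A \<union> B = \<Union>F" and di: "A \<inter> B = {}"
    and ne2: "\<forall>a\<in>A. \<forall>b\<in>B. (a, b) \<notin> E"
    unfolding gconnected_def by blast
  obtain CA where CA: "closedin X CA" "A = CA \<inter> \<Union>F" using A unfolding closedin_subtopology by blast
  obtain CB where CB: "closedin X CB" "B = CB \<inter> \<Union>F" using B unfolding closedin_subtopology by blast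
  have F_ne: "F \<noteq> {}" using ne un by auto
  have vin: "v \<in> \<Union>F" using F_ne v by auto
  have side: "T \<subseteq> A \<or> T \<subseteq> B" if T: "T \<in> F" for T
  proof (rule ccontr)
    assume nn: "\<not> (T \<subseteq> A \<or> T \<subseteq> B)"
    have "closedin (subtopology X T) (CA \<inter> T)" "closedin (subtopology X T) (CB \<inter> T)"
      using CA CB unfolding closedin_subtopology by blast+
    moreover have "CA \<inter> T = A \<inter> T" "CB \<inter> T = B \<inter> T" using CA CB T by blast+
    ultimately have c: "closedin (subtopology X T) (A \<inter> T)" "closedin (subtopology X T) (B \<inter> T)" by simp_all
    have Tsub: "T \<subseteq> A \<union> B" using T un by auto
    have "A \<inter> T \<noteq> {}" "B \<inter> T \<noteq> {}" using nn Tsub by blast+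
    moreover have "(A \<inter> T) \<union> (B \<inter> T) = T" using Tsub by auto
    moreover have "(A \<inter> T) \<inter> (B \<inter> T) = {}" using di by blast
    moreover have "\<forall>a\<in>A \<inter> T. \<forall>b\<in>B \<inter> T. (a, b) \<notin> E" using ne2 by blast
    ultimately show False using conn[OF T] c unfolding gconnected_def by blast
  qed
  show False
  proof (cases "v \<in> A")
    case True
    then have "\<forall>T\<in>F. T \<subseteq> A" using side v di by blast
    then have "\<Union>F \<subseteq> A" by blast
    moreover have "B \<subseteq> \<Union>F" using un by auto
    ultimately show False using ne di by blast
  next
    case False
    then have "v \<in> B" using vin un by auto
    then have "\<forall>T\<in>F. T \<subseteq> B" using side v di by blast
    then have "\<Union>F \<subseteq> B" by blast
    moreover have "A \<subseteq> \<Union>F" using un by auto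
    ultimately show False using ne di by blast
  qed
qed

lemma gconnected_Un:
  assumes "gconnected X E S" "gconnected X E T" "v \<in> S" "v \<in> T"
  shows "gconnected X E (S \<union> T)"
proof -
  have "gconnected X E (\<Union>{S,T})"
    by (rule gconnected_Union[of "{S,T}" X E v]) (use assms in auto)
  then show ?thesis by simp
qed

definition comp :: "'a topology \<Rightarrow> ('a \<times> 'a) set \<Rightarrow> 'a set \<Rightarrow> 'a \<Rightarrow> 'a set" where
  "comp X E S v = \<Union>{T. T \<subseteq> S \<and> v \<in> T \<and> gconnected X E T}"

lemma gcomponentI:
  assumes "K \<subseteq> S" "gconnected X E K" "\<And>D. K \<subseteq> D \<Longrightarrow> D \<subseteq> S \<Longrightarrow> gconnected X E D \<Longrightarrow> D \<subseteq> K"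
  shows "gcomponent X E S K"
  unfolding gcomponent_def using assms by (meson subset_antisym)

lemma gcomponentD:
  assumes "gcomponent X E S K"
  shows "K \<subseteq> S" "gconnected X E K" "\<And>D. K \<subseteq> D \<Longrightarrow> D \<subseteq> S \<Longrightarrow> gconnected X E D \<Longrightarrow> D = K"
  using assms unfolding gcomponent_def by auto

lemma comp_gcomponent:
  assumes "v \<in> S"
  shows "gcomponent X E S (comp X E S v)" "v \<in> comp X E S v"
proof -
  have c: "gconnected X E (comp X E S v)"
    unfolding comp_def by (rule gconnected_Union[where v=v]) auto
  have "{v} \<in> {T. T \<subseteq> S \<and> v \<in> T \<and> gconnected X E T}"
    using assms gconnected_singleton[of X E v] by simp
  then have vin: "v \<in> comp X E S v" unfolding comp_def by (meson UnionI singletonI)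
  show "v \<in> comp X E S v" by (rule vin)
  show "gcomponent X E S (comp X E S v)"
  proof (rule gcomponentI)
    show "comp X E S v \<subseteq> S" unfolding comp_def by auto
    show "gconnected X E (comp X E S v)" by (rule c)
    fix D assume D: "comp X E S v \<subseteq> D" "D \<subseteq> S" "gconnected X E D"
    then have "v \<in> D" using vin by (meson subsetD)
    then have "D \<in> {T. T \<subseteq> S \<and> v \<in> T \<and> gconnected X E T}" using D by simp
    then show "D \<subseteq> comp X E S v" unfolding comp_def by (rule Union_upper)
  qed
qed

lemma gcomponent_absorb:
  assumes "gcomponent X E S K" "T \<subseteq> S" "gconnected X E T" "T \<inter> K \<noteq> {}"
  shows "T \<subseteq> K"
proof -
  obtain v where v: "v \<in> T" "v \<in> K" using assms(4) by blast
  have "gconnected X E (K \<union> T)" using gconnected_Un[of X E K T v] gcomponentD[OF assms(1)] assms(3) v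
    by simp
  moreover have "K \<union> T \<subseteq> S" using gcomponentD[OF assms(1)] assms(2) by simp
  ultimately have "K \<union> T = K" using gcomponentD(3)[OF assms(1), of "K \<union> T"] by simp
  then show ?thesis by (metis Un_upper2)
qed

lemma gcomponent_nonempty:
  assumes "gcomponent X E S K" "S \<noteq> {}"
  shows "K \<noteq> {}"
proof
  assume K: "K = {}"
  obtain s where s: "s \<in> S" using assms by blast
  then have "{s} = K" using gcomponentD(3)[OF assms(1), of "{s}"] gconnected_singleton[of X E s] K by simp
  then show False using K by simp
qed

lemma gcomponent_mono:
  assumes "gcomponent X E S K" "K \<subseteq> S'" "S' \<subseteq> S"
  shows "gcomponent X E S' K"
proof (rule gcomponentI)
  show "K \<subseteq> S'" "gconnected X E K" using assms gcomponentD[OF assms(1)] by simp_all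
  fix D assume "K \<subseteq> D" "D \<subseteq> S'" "gconnected X E D"
  then show "D \<subseteq> K" using gcomponentD(3)[OF assms(1), of D] assms(3) by simp
qed

definition dconn :: "('b \<times> 'b) set \<Rightarrow> 'b set \<Rightarrow> bool" where
  "dconn E S \<longleftrightarrow> \<not> (\<exists>A B. A \<noteq> {} \<and> B \<noteq> {} \<and> A \<union> B = S \<and> A \<inter> B = {}
      \<and> (\<forall>a\<in>A. \<forall>b\<in>B. (a, b) \<notin> E))"

lemma dconnD:
  assumes "dconn E S" "P \<noteq> {}" "Q \<noteq> {}" "P \<union> Q = S" "P \<inter> Q = {}" "\<forall>a\<in>P. \<forall>b\<in>Q. (a, b) \<notin> E"
  shows False
proof -
  have "\<exists>A B. A \<noteq> {} \<and> B \<noteq> {} \<and> A \<union> B = S \<and> A \<inter> B = {} \<and> (\<forall>a\<in>A. \<forall>b\<in>B. (a, b) \<notin> E)"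
    using assms(2-6) by (intro exI[of _ P] exI[of _ Q] conjI)
  from assms(1) this show False unfolding dconn_def by (rule notE)
qed

lemma gconnectedD:
  assumes "gconnected X E S" "closedin (subtopology X S) P" "closedin (subtopology X S) Q"
    "P \<noteq> {}" "Q \<noteq> {}" "P \<union> Q = S" "P \<inter> Q = {}" "\<forall>a\<in>P. \<forall>b\<in>Q. (a, b) \<notin> E"
  shows False
proof -
  have "\<exists>A B. closedin (subtopology X S) A \<and> closedin (subtopology X S) B
      \<and> A \<noteq> {} \<and> B \<noteq> {} \<and> A \<union> B = S \<and> A \<inter> B = {} \<and> (\<forall>a\<in>A. \<forall>b\<in>B. (a, b) \<notin> E)"
    using assms(2-8) by (intro exI[of _ P] exI[of _ Q] conjI)
  from assms(1) this show False unfolding gconnected_def by (rule notE)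
qed

lemma gconnected_discrete:
  assumes "S \<subseteq> D"
  shows "gconnected (discrete_topology D) E S \<longleftrightarrow> dconn E S"
proof
  assume L: "gconnected (discrete_topology D) E S"
  show "dconn E S" unfolding dconn_def
  proof
    assume "\<exists>A B. A \<noteq> {} \<and> B \<noteq> {} \<and> A \<union> B = S \<and> A \<inter> B = {} \<and> (\<forall>a\<in>A. \<forall>b\<in>B. (a, b) \<notin> E)"
    then obtain A B where AB: "A \<noteq> {}" "B \<noteq> {}" "A \<union> B = S" "A \<inter> B = {}" "\<forall>a\<in>A. \<forall>b\<in>B. (a, b) \<notin> E"
      by blast
    have "A \<subseteq> D \<inter> S" "B \<subseteq> D \<inter> S" using AB(3) assms by auto
    then have "closedin (subtopology (discrete_topology D) S) A" "closedin (subtopology (discrete_topology D) S) B"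
      by simp_all
    then show False using L AB unfolding gconnected_def by blast
  qed
next
  assume R: "dconn E S"
  show "gconnected (discrete_topology D) E S" unfolding gconnected_def
  proof
    assume "\<exists>A B. closedin (subtopology (discrete_topology D) S) A \<and> closedin (subtopology (discrete_topology D) S) B
      \<and> A \<noteq> {} \<and> B \<noteq> {} \<and> A \<union> B = S \<and> A \<inter> B = {} \<and> (\<forall>a\<in>A. \<forall>b\<in>B. (a, b) \<notin> E)"
    then obtain A B where AB: "A \<noteq> {}" "B \<noteq> {}" "A \<union> B = S" "A \<inter> B = {}" "\<forall>a\<in>A. \<forall>b\<in>B. (a, b) \<notin> E"
      by blast
    then show False using R unfolding dconn_def by blast
  qed
qed

lemma dconn_Int:
  assumes "S \<subseteq> A"
  shows "dconn (E \<inter> A \<times> A) S \<longleftrightarrow> dconn E S"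
proof -
  have "(P \<noteq> {} \<and> Q \<noteq> {} \<and> P \<union> Q = S \<and> P \<inter> Q = {} \<and> (\<forall>a\<in>P. \<forall>b\<in>Q. (a, b) \<notin> E \<inter> A \<times> A))
    \<longleftrightarrow> (P \<noteq> {} \<and> Q \<noteq> {} \<and> P \<union> Q = S \<and> P \<inter> Q = {} \<and> (\<forall>a\<in>P. \<forall>b\<in>Q. (a, b) \<notin> E))" for P Q
    using assms by auto
  then show ?thesis unfolding dconn_def by presburger
qed

lemma dconn_pair:
  assumes "(a, b) \<in> E" "(b, a) \<in> E"
  shows "dconn E {a, b}"
  unfolding dconn_def
proof
  assume "\<exists>A B. A \<noteq> {} \<and> B \<noteq> {} \<and> A \<union> B = {a, b} \<and> A \<inter> B = {} \<and> (\<forall>a\<in>A. \<forall>b\<in>B. (a, b) \<notin> E)"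
  then obtain A B where AB: "A \<noteq> {}" "B \<noteq> {}" "A \<union> B = {a, b}" "A \<inter> B = {}" "\<forall>x\<in>A. \<forall>y\<in>B. (x, y) \<notin> E"
    by blast
  have "A \<subseteq> {a, b}" "B \<subseteq> {a, b}" using AB(3) by auto
  obtain p q where pq: "p \<in> A" "q \<in> B" using AB(1,2) by blast
  then have "p \<noteq> q" using AB(4) by auto
  moreover have "p \<in> {a, b}" "q \<in> {a, b}" using pq \<open>A \<subseteq> {a, b}\<close> \<open>B \<subseteq> {a, b}\<close> by blast+
  ultimately have "(p, q) \<in> E" using assms by auto
  then show False using AB(5) pq by blast
qed

lemma dconn_side:
  assumes "dconn E T" "T \<subseteq> A \<union> B" "A \<inter> B = {}" "\<forall>a\<in>A. \<forall>b\<in>B. (a, b) \<notin> E"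
  shows "T \<subseteq> A \<or> T \<subseteq> B"
proof (rule ccontr)
  assume "\<not> (T \<subseteq> A \<or> T \<subseteq> B)"
  then have "T \<inter> A \<noteq> {}" "T \<inter> B \<noteq> {}" using assms(2) by auto
  moreover have "(T \<inter> A) \<union> (T \<inter> B) = T" "(T \<inter> A) \<inter> (T \<inter> B) = {}" using assms(2,3) by auto
  ultimately show False by (rule dconnD[OF assms(1)]) (use assms(4) in blast)
qed

lemma image_gconnected:
  assumes f: "continuous_map X (discrete_topology D) f"
    and ep: "\<forall>a b. (a, b) \<in> E \<longrightarrow> (f a, f b) \<in> E'"
    and c: "gconnected X E S" and S: "S \<subseteq> topspace X"
  shows "dconn E' (f ` S)"
  unfolding dconn_def
proof
  assume "\<exists>A B. A \<noteq> {} \<and> B \<noteq> {} \<and> A \<union> B = f ` S \<and> A \<inter> B = {} \<and> (\<forall>a\<in>A. \<forall>b\<in>B. (a, b) \<notin> E')"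
  then obtain A' B' where AB: "A' \<noteq> {}" "B' \<noteq> {}" "A' \<union> B' = f ` S" "A' \<inter> B' = {}"
    "\<forall>a\<in>A'. \<forall>b\<in>B'. (a, b) \<notin> E'" by blast
  have fS: "f ` S \<subseteq> D" using f S by (auto simp: continuous_map_def)
  have cl: "closedin (subtopology X S) (S \<inter> f -` Z)" if "Z \<subseteq> D" for Z
  proof -
    have "closedin X {x \<in> topspace X. f x \<in> Z}"
      by (rule closedin_continuous_map_preimage[OF f]) (simp add: that)
    moreover have "S \<inter> f -` Z = {x \<in> topspace X. f x \<in> Z} \<inter> S" using S by auto
    ultimately show ?thesis unfolding closedin_subtopology by blast
  qed
  have "closedin (subtopology X S) (S \<inter> f -` A')" "closedin (subtopology X S) (S \<inter> f -` B')"
    using cl AB(3) fS by (metis Un_upper1 Un_upper2 subset_trans)+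
  moreover have "S \<inter> f -` A' \<noteq> {}"
  proof -
    obtain a where a: "a \<in> A'" using AB(1) by blast
    then have "a \<in> f ` S" using AB(3) by (metis Un_iff)
    then show ?thesis using a by blast
  qed
  moreover have "S \<inter> f -` B' \<noteq> {}"
  proof -
    obtain a where a: "a \<in> B'" using AB(2) by blast
    then have "a \<in> f ` S" using AB(3) by (metis Un_iff)
    then show ?thesis using a by blast
  qed
  moreover have "(S \<inter> f -` A') \<union> (S \<inter> f -` B') = S"
  proof -
    have "\<And>s. s \<in> S \<Longrightarrow> f s \<in> A' \<or> f s \<in> B'" using AB(3) by (metis Un_iff imageI)
    then show ?thesis by auto
  qed
  moreover have "(S \<inter> f -` A') \<inter> (S \<inter> f -` B') = {}"
    using AB(4) by (metis disjoint_iff Int_iff vimage_eq)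
  moreover have "\<forall>a\<in>S \<inter> f -` A'. \<forall>b\<in>S \<inter> f -` B'. (a, b) \<notin> E" using AB(5) ep by blast
  ultimately show False by (rule gconnectedD[OF c])
qed



lemma unif_partition:
  fixes K :: "'a::metric_space set" and f :: "'a \<Rightarrow> nat"
  assumes "compact K" "\<And>B. openin (top_of_set K) (K \<inter> f -` B)"
  shows "\<exists>\<delta>>0. \<forall>u\<in>K. \<forall>v\<in>K. dist u v < \<delta> \<longrightarrow> f u = f v"
proof -
  have "continuous_on K (\<lambda>u. real (f u))"
    unfolding continuous_on_open_invariant
  proof (intro allI impI)
    fix B :: "real set" assume "open B"
    have "openin (top_of_set K) (K \<inter> f -` {n. real n \<in> B})" by (rule assms(2))
    then obtain T where T: "open T" "K \<inter> f -` {n. real n \<in> B} = K \<inter> T" unfolding openin_open by blast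
    have "T \<inter> K = (\<lambda>u. real (f u)) -` B \<inter> K" using T(2) by (auto simp: set_eq_iff)
    then show "\<exists>A. open A \<and> A \<inter> K = (\<lambda>u. real (f u)) -` B \<inter> K" using T(1) by blast
  qed
  then have "uniformly_continuous_on K (\<lambda>u. real (f u))"
    using assms(1) compact_uniformly_continuous by blast
  then obtain d where d: "d > 0" "\<forall>x\<in>K. \<forall>x'\<in>K. dist x' x < d \<longrightarrow> dist (real (f x')) (real (f x)) < 1"
    unfolding uniformly_continuous_on_def by (meson zero_less_one)
  have "\<forall>u\<in>K. \<forall>v\<in>K. dist u v < d \<longrightarrow> f u = f v"
  proof (intro ballI impI)
    fix u v assume uv: "u \<in> K" "v \<in> K" "dist u v < d"
    then have "dist (real (f u)) (real (f v)) < 1" using d(2) by blast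
    then have "\<bar>real (f u) - real (f v)\<bar> < 1" by (simp add: dist_real_def)
    then show "f u = f v" by linarith
  qed
  then show ?thesis using d(1) by blast
qed

lemma conf_epi: "confluent X E Y E' f \<Longrightarrow> epimorphism X E Y E' f"
  unfolding confluent_def by (rule conjunct1)


lemma conf_edge:
  assumes "confluent X E Y E' P" "(u, v) \<in> E"
  shows "(P u, P v) \<in> E'"
proof -
  have "\<forall>a b. (a, b) \<in> E \<longrightarrow> (P a, P b) \<in> E'" using conf_epi[OF assms(1)] unfolding epimorphism_def by (elim conjE)
  then show ?thesis using assms(2) by simp
qed


lemma conf_edge_surj:
  assumes "confluent X E Y E' P" "(a, b) \<in> E'"
  shows "\<exists>u v. (u, v) \<in> E \<and> P u = a \<and> P v = b"
proof -
  have "(\<lambda>(a, b). (P a, P b)) ` E = E'" using conf_epi[OF assms(1)] unfolding epimorphism_def by (elim conjE)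
  then have "(a, b) \<in> (\<lambda>(a, b). (P a, P b)) ` E" using assms(2) by simp
  then show ?thesis by auto
qed


lemma conf_cont:
  assumes "confluent X E Y E' P"
  shows "continuous_map X Y P"
  using conf_epi[OF assms(1)] unfolding epimorphism_def by (elim conjE)


lemma fcg_dconn: "finite_connected_graph D ED \<Longrightarrow> dconn ED D"
  unfolding finite_connected_graph_def using gconnected_discrete[of D D] by simp


lemma fcg_graph: "finite_connected_graph D ED \<Longrightarrow> graph D ED"
  unfolding finite_connected_graph_def by simp


locale FL =
  fixes VG :: "'a::metric_space set" and EG :: "('a \<times> 'a) set"
  assumes FL: "is_Fraisse_limit VG EG"
begin

lemma tg: "topological_graph VG EG" using FL unfolding is_Fraisse_limit_def by (elim conjE)

lemma EG_sub: "EG \<subseteq> VG \<times> VG" using tg unfolding topological_graph_def graph_def by (elim conjE)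
lemma EG_refl: "v \<in> VG \<Longrightarrow> (v, v) \<in> EG" using tg unfolding topological_graph_def graph_def by blast
lemma EG_sym: "(a, b) \<in> EG \<Longrightarrow> (b, a) \<in> EG" using tg unfolding topological_graph_def graph_def by blast
lemma VG_compact: "compact VG" using tg unfolding topological_graph_def by (elim conjE)
lemma VG_closed: "closed VG" using VG_compact by (rule compact_imp_closed)
lemma EG_closed: "closed EG" using tg unfolding topological_graph_def by (elim conjE)

lemma ex1: "finite_connected_graph VA EA \<Longrightarrow> \<exists>f. confluent (top_of_set VG) EG (discrete_topology VA) EA f"
proof -
  have H: "\<forall>VA EA. finite_connected_graph VA EA \<longrightarrow>
        (\<exists>f. confluent (top_of_set VG) EG (discrete_topology VA) EA f)"
    using FL unfolding is_Fraisse_limit_def by (elim conjE)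
  assume "finite_connected_graph VA EA"
  then show ?thesis by (rule H[rule_format])
qed

lemma ex2:
  assumes "finite_connected_graph VA EA" "finite_connected_graph VB EB"
    "confluent (top_of_set VG) EG (discrete_topology VA) EA f"
    "confluent (discrete_topology VB) EB (discrete_topology VA) EA g"
  shows "\<exists>h. confluent (top_of_set VG) EG (discrete_topology VB) EB h \<and> (\<forall>x\<in>VG. f x = g (h x))"
proof -
  have "\<forall>VA EA VB EB f g. finite_connected_graph VA EA \<and> finite_connected_graph VB EB
        \<and> confluent (top_of_set VG) EG (discrete_topology VA) EA f
        \<and> confluent (discrete_topology VB) EB (discrete_topology VA) EA g \<longrightarrow>
        (\<exists>h. confluent (top_of_set VG) EG (discrete_topology VB) EB h \<and> (\<forall>x\<in>VG. f x = g (h x)))"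
    using FL unfolding is_Fraisse_limit_def by (elim conjE)
  then have H: "finite_connected_graph VA EA \<and> finite_connected_graph VB EB
        \<and> confluent (top_of_set VG) EG (discrete_topology VA) EA f
        \<and> confluent (discrete_topology VB) EB (discrete_topology VA) EA g \<longrightarrow>
        (\<exists>h. confluent (top_of_set VG) EG (discrete_topology VB) EB h \<and> (\<forall>x\<in>VG. f x = g (h x)))"
    by (elim allE)
  show ?thesis by (rule H[rule_format]) (simp add: assms)
qed

lemma ex3:
  assumes "\<epsilon> > 0"
  shows "\<exists>VA EA f. finite_connected_graph VA EA
        \<and> confluent (top_of_set VG) EG (discrete_topology VA) EA f
        \<and> (\<forall>a\<in>VA. diameter (VG \<inter> f -` {a}) < \<epsilon>)"
proof -
  have "\<forall>\<epsilon>>0. \<exists>VA EA f. finite_connected_graph VA EA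
        \<and> confluent (top_of_set VG) EG (discrete_topology VA) EA f
        \<and> (\<forall>a\<in>VA. diameter (VG \<inter> f -` {a}) < \<epsilon>)"
    using FL unfolding is_Fraisse_limit_def by (elim conjE)
  then show ?thesis using assms by (elim allE impE)
qed

lemma diam_bound:
  assumes "u \<in> VG \<inter> f -` {a}" "v \<in> VG \<inter> f -` {a}"
  shows "dist u v \<le> diameter (VG \<inter> f -` {a})"
proof -
  have "bounded (VG \<inter> f -` {a})" by (rule bounded_subset[OF compact_imp_bounded[OF VG_compact]]) (rule Int_lower1)
  then show ?thesis using assms diameter_bounded_bound by blast
qed

section \<open>Properties of confluent maps from G\<close>

lemma conf_maps:
  assumes "confluent (top_of_set VG) EG (discrete_topology D) ED P" "u \<in> VG"
  shows "P u \<in> D"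
proof -
  have "P ` VG = D" using conf_epi[OF assms(1)] unfolding epimorphism_def by simp
  then show ?thesis using assms(2) by (metis imageI)
qed

lemma conf_onto:
  assumes "confluent (top_of_set VG) EG (discrete_topology D) ED P"
  shows "P ` VG = D"
  using conf_epi[OF assms(1)] unfolding epimorphism_def by simp

lemma conf_closedin:
  assumes "confluent (top_of_set VG) EG (discrete_topology D) ED P"
  shows "closedin (top_of_set VG) (VG \<inter> P -` B)"
proof -
  have "closedin (top_of_set VG) {x \<in> topspace (top_of_set VG). P x \<in> B \<inter> D}"
    by (rule closedin_continuous_map_preimage[OF conf_cont[OF assms]]) simp
  moreover have "{x \<in> topspace (top_of_set VG). P x \<in> B \<inter> D} = VG \<inter> P -` B"
    using conf_maps[OF assms] by auto
  ultimately show ?thesis by simp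
qed

lemma conf_openin:
  assumes "confluent (top_of_set VG) EG (discrete_topology D) ED P"
  shows "openin (top_of_set VG) (VG \<inter> P -` B)"
proof -
  have "openin (top_of_set VG) {x \<in> topspace (top_of_set VG). P x \<in> B \<inter> D}"
    by (rule openin_continuous_map_preimage[OF conf_cont[OF assms]]) simp
  moreover have "{x \<in> topspace (top_of_set VG). P x \<in> B \<inter> D} = VG \<inter> P -` B"
    using conf_maps[OF assms] by auto
  ultimately show ?thesis by simp
qed

lemma conf_closed:
  assumes "confluent (top_of_set VG) EG (discrete_topology D) ED P"
  shows "closed (VG \<inter> P -` B)"
  using closedin_closed_trans[OF conf_closedin[OF assms] VG_closed] .

lemma conf_comp:
  assumes "confluent (top_of_set VG) EG (discrete_topology D) ED P" "Q \<subseteq> D" "dconn ED Q"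
    "gcomponent (top_of_set VG) EG (VG \<inter> P -` Q) K"
  shows "P ` K = Q"
proof -
  have c: "gconnected (discrete_topology D) ED Q" using gconnected_discrete[OF assms(2)] assms(3) by simp
  have H: "\<forall>Q. Q \<subseteq> topspace (discrete_topology D) \<and> gconnected (discrete_topology D) ED Q \<longrightarrow>
        (\<forall>C. gcomponent (top_of_set VG) EG (topspace (top_of_set VG) \<inter> P -` Q) C \<longrightarrow> P ` C = Q)"
    using assms(1) unfolding confluent_def by (elim conjE)
  have "topspace (top_of_set VG) \<inter> P -` Q = VG \<inter> P -` Q" by simp
  then have "gcomponent (top_of_set VG) EG (topspace (top_of_set VG) \<inter> P -` Q) K" using assms(4) by simp
  moreover have "Q \<subseteq> topspace (discrete_topology D) \<and> gconnected (discrete_topology D) ED Q" using assms(2) c by simp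
  ultimately show ?thesis using H by blast
qed

lemma split_closedin:
  assumes "closedin (top_of_set VG) C" "K \<subseteq> VG"
  shows "closedin (subtopology (top_of_set VG) K) (K \<inter> C)"
  by (rule closedin_subtopology_Int_closed[OF assms(1)])

lemma G_connected: "gconnected (top_of_set VG) EG VG"
proof (rule ccontr)
  assume "\<not> gconnected (top_of_set VG) EG VG"
  then obtain S T where ST: "closedin (subtopology (top_of_set VG) VG) S" "closedin (subtopology (top_of_set VG) VG) T"
    "S \<noteq> {}" "T \<noteq> {}" "S \<union> T = VG" "S \<inter> T = {}" "\<forall>a\<in>S. \<forall>b\<in>T. (a, b) \<notin> EG"
    unfolding gconnected_def by blast
  have sub: "subtopology (top_of_set VG) VG = top_of_set VG" by (simp add: subtopology_subtopology)
  have cS: "closedin (top_of_set VG) S" and cT: "closedin (top_of_set VG) T" using ST(1,2) sub by simp_all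
  define f where "f u = (if u \<in> S then 0 else (1::nat))" for u
  have fS: "VG \<inter> f -` B = (if 0 \<in> B then S else {}) \<union> (if 1 \<in> B then T else {})" for B
    using ST(5,6) unfolding f_def by (auto simp: set_eq_iff)
  have oS: "openin (top_of_set VG) S"
  proof -
    have "S = VG - T" using ST(5,6) by auto
    then show ?thesis using cT by (simp add: openin_diff)
  qed
  have oT: "openin (top_of_set VG) T"
  proof -
    have "T = VG - S" using ST(5,6) by auto
    then show ?thesis using cS by (simp add: openin_diff)
  qed
  have "openin (top_of_set VG) (VG \<inter> f -` B)" for B
    unfolding fS using oS oT by (auto intro: openin_Un)
  then obtain \<delta> where d: "\<delta> > 0" "\<forall>u\<in>VG. \<forall>v\<in>VG. dist u v < \<delta> \<longrightarrow> f u = f v"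
    using unif_partition[OF VG_compact, of f] by blast
  obtain VA EA P where P: "finite_connected_graph VA EA" "confluent (top_of_set VG) EG (discrete_topology VA) EA P"
    "\<forall>a\<in>VA. diameter (VG \<inter> P -` {a}) < \<delta>"
    using ex3[OF d(1)] by blast
  have same: "P s \<noteq> P t" if "s \<in> S" "t \<in> T" for s t
  proof
    assume eq: "P s = P t"
    have sv: "s \<in> VG" "t \<in> VG" using that ST(5) by auto
    then have "P s \<in> VA" using conf_maps[OF P(2)] by blast
    have "dist s t \<le> diameter (VG \<inter> P -` {P s})" by (rule diam_bound) (use sv eq in auto)
    also have "\<dots> < \<delta>" using P(3) \<open>P s \<in> VA\<close> by blast
    finally have "f s = f t" using d(2) sv by blast
    moreover have "t \<notin> S" using ST(6) that by (meson disjoint_iff)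
    ultimately show False using that unfolding f_def by auto
  qed
  have "dconn EA VA" using fcg_dconn[OF P(1)] .
  moreover have "P ` S \<noteq> {}" "P ` T \<noteq> {}" using ST(3,4) by auto
  moreover have "P ` S \<union> P ` T = VA" using conf_onto[OF P(2)] ST(5) by (metis image_Un)
  moreover have "P ` S \<inter> P ` T = {}" using same by auto
  moreover have "\<forall>a\<in>P ` S. \<forall>b\<in>P ` T. (a, b) \<notin> EA"
  proof (intro ballI notI)
    fix a b assume ab: "a \<in> P ` S" "b \<in> P ` T" "(a, b) \<in> EA"
    obtain u v where uv: "(u, v) \<in> EG" "P u = a" "P v = b" using conf_edge_surj[OF P(2) ab(3)] by blast
    have "u \<in> VG" "v \<in> VG" using uv(1) EG_sub by auto
    have "u \<in> S"
    proof (rule ccontr)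
      assume "u \<notin> S" then have "u \<in> T" using \<open>u \<in> VG\<close> ST(5) by auto
      then show False using ab(1) uv(2) same by (metis imageE)
    qed
    moreover have "v \<in> T"
    proof (rule ccontr)
      assume "v \<notin> T" then have "v \<in> S" using \<open>v \<in> VG\<close> ST(5) by auto
      then show False using ab(2) uv(3) same by (metis imageE)
    qed
    ultimately show False using ST(7) uv(1) by blast
  qed
  ultimately show False by (rule dconnD)
qed

end



context FL begin

lemma comp_closed:
  assumes K: "gcomponent (top_of_set VG) EG S K" and S: "closed S" "S \<subseteq> VG"
  shows "closed K"
proof -
  define K' where "K' = closure K"
  have KS: "K \<subseteq> S" using gcomponentD(1)[OF K] .
  have K'S: "K' \<subseteq> S" unfolding K'_def using KS S(1) by (rule closure_minimal)
  have KK': "K \<subseteq> K'" unfolding K'_def by (rule closure_subset)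
  have cK': "closed K'" unfolding K'_def by simp
  have K'VG: "K' \<subseteq> VG" using K'S S(2) by (rule subset_trans)
  have KVG: "K \<subseteq> VG" using KS S(2) by (rule subset_trans)
  have sub: "subtopology (top_of_set VG) K' = top_of_set K'"
    using K'VG by (simp add: subtopology_subtopology Int_absorb1)
  have "gconnected (top_of_set VG) EG K'"
  proof (rule ccontr)
    assume "\<not> gconnected (top_of_set VG) EG K'"
    then obtain A B where AB: "closedin (subtopology (top_of_set VG) K') A" "closedin (subtopology (top_of_set VG) K') B"
      "A \<noteq> {}" "B \<noteq> {}" "A \<union> B = K'" "A \<inter> B = {}" "\<forall>a\<in>A. \<forall>b\<in>B. (a, b) \<notin> EG"
      unfolding gconnected_def by blast
    have cA: "closed A" using AB(1) sub closedin_closed_trans cK' by metis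
    have cB: "closed B" using AB(2) sub closedin_closed_trans cK' by metis
    have AVG: "A \<subseteq> VG" "B \<subseteq> VG" using AB(5) K'VG by auto
    have ciA: "closedin (top_of_set VG) A" using closed_subset[OF AVG(1) cA] .
    have ciB: "closedin (top_of_set VG) B" using closed_subset[OF AVG(2) cB] .
    have c1: "closedin (subtopology (top_of_set VG) K) (K \<inter> A)" by (rule split_closedin[OF ciA KVG])
    have c2: "closedin (subtopology (top_of_set VG) K) (K \<inter> B)" by (rule split_closedin[OF ciB KVG])
    have un: "(K \<inter> A) \<union> (K \<inter> B) = K" using AB(5) KK' by auto
    have di: "(K \<inter> A) \<inter> (K \<inter> B) = {}" using AB(6) by auto
    have ne: "\<forall>a\<in>K \<inter> A. \<forall>b\<in>K \<inter> B. (a, b) \<notin> EG" using AB(7) by simp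
    have "K \<inter> A = {} \<or> K \<inter> B = {}"
    proof (rule ccontr)
      assume "\<not> (K \<inter> A = {} \<or> K \<inter> B = {})"
      then have "K \<inter> A \<noteq> {}" "K \<inter> B \<noteq> {}" by simp_all
      then show False using gconnectedD[OF gcomponentD(2)[OF K] c1 c2 _ _ un di ne] by simp
    qed
    then show False
    proof
      assume "K \<inter> A = {}"
      then have "K \<subseteq> B" using un by auto
      then have "K' \<subseteq> B" unfolding K'_def using cB by (rule closure_minimal)
      then show False using AB(3,5,6) by auto
    next
      assume "K \<inter> B = {}"
      then have "K \<subseteq> A" using un by auto
      then have "K' \<subseteq> A" unfolding K'_def using cA by (rule closure_minimal)
      then show False using AB(4,5,6) by auto
    qed
  qed
  then have "K' = K" using gcomponentD(3)[OF K KK' K'S] by simp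
  then show ?thesis using cK' by simp
qed

definition Side :: "'a set \<Rightarrow> ('a \<Rightarrow> nat) \<Rightarrow> nat set \<Rightarrow> (nat \<times> nat) set \<Rightarrow> nat set \<Rightarrow> (nat \<times> nat) set \<Rightarrow> bool" where
  "Side X P D ED A EA \<longleftrightarrow> confluent (top_of_set VG) EG (discrete_topology D) ED P \<and> finite_connected_graph D ED
     \<and> A \<subseteq> D \<and> EA = ED \<inter> A \<times> A \<and> A \<noteq> {} \<and> dconn EA A \<and> gcomponent (top_of_set VG) EG (VG \<inter> P -` A) X"

lemma SideD1: "Side X P D ED A EA \<Longrightarrow> confluent (top_of_set VG) EG (discrete_topology D) ED P"
  unfolding Side_def by (elim conjE)

lemma SideD2: "Side X P D ED A EA \<Longrightarrow> finite_connected_graph D ED"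
  unfolding Side_def by (elim conjE)

lemma SideD3: "Side X P D ED A EA \<Longrightarrow> A \<subseteq> D"
  unfolding Side_def by (elim conjE)

lemma SideD4: "Side X P D ED A EA \<Longrightarrow> EA = ED \<inter> A \<times> A"
  unfolding Side_def by (elim conjE)

lemma SideD5: "Side X P D ED A EA \<Longrightarrow> A \<noteq> {}"
  unfolding Side_def by (elim conjE)

lemma SideD6: "Side X P D ED A EA \<Longrightarrow> dconn EA A"
  unfolding Side_def by (elim conjE)

lemma SideD7: "Side X P D ED A EA \<Longrightarrow> gcomponent (top_of_set VG) EG (VG \<inter> P -` A) X"
  unfolding Side_def by (elim conjE)

lemmas SideD = SideD1 SideD2 SideD3 SideD4 SideD5 SideD6 SideD7

lemma side_dconn: "Side X P D ED A EA \<Longrightarrow> dconn ED A"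
  using SideD(4,6)[of X P D ED A EA] dconn_Int[of A A ED] by simp

lemma side_XVG: "Side X P D ED A EA \<Longrightarrow> X \<subseteq> VG \<inter> P -` A"
  using gcomponentD(1)[OF SideD(7)] by simp

lemma side_conn: "Side X P D ED A EA \<Longrightarrow> gconnected (top_of_set VG) EG X"
  using gcomponentD(2)[OF SideD(7)] by simp

lemma side_image: "Side X P D ED A EA \<Longrightarrow> P ` X = A"
  using conf_comp[OF SideD(1) SideD(3) side_dconn SideD(7)] by simp

lemma side_closed: "Side X P D ED A EA \<Longrightarrow> closed X"
  using comp_closed[OF SideD(7) conf_closed[OF SideD(1)]] by simp

lemma side_ne: "Side X P D ED A EA \<Longrightarrow> X \<noteq> {}"
  using side_image SideD(5) by blast

lemma side_comp:
  assumes "Side X P D ED A EA" "v \<in> X" "Q \<subseteq> A" "dconn ED Q" "P v \<in> Q"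
  shows "comp (top_of_set VG) EG (VG \<inter> P -` Q) v \<subseteq> X" "P ` comp (top_of_set VG) EG (VG \<inter> P -` Q) v = Q"
proof -
  have vQ: "v \<in> VG \<inter> P -` Q" using assms(2,5) side_XVG[OF assms(1)] by auto
  note K = comp_gcomponent[OF vQ, of "top_of_set VG" EG]
  have QD: "Q \<subseteq> D" using assms(3) SideD(3)[OF assms(1)] by (rule subset_trans)
  show "P ` comp (top_of_set VG) EG (VG \<inter> P -` Q) v = Q" by (rule conf_comp[OF SideD(1)[OF assms(1)] QD assms(4) K(1)])
  have "comp (top_of_set VG) EG (VG \<inter> P -` Q) v \<subseteq> VG \<inter> P -` A"
    using gcomponentD(1)[OF K(1)] assms(3) by auto
  moreover have "comp (top_of_set VG) EG (VG \<inter> P -` Q) v \<inter> X \<noteq> {}" using K(2) assms(2) by auto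
  ultimately show "comp (top_of_set VG) EG (VG \<inter> P -` Q) v \<subseteq> X"
    using gcomponent_absorb[OF SideD(7)[OF assms(1)] _ gcomponentD(2)[OF K(1)]] by simp
qed

lemma side_edges:
  assumes S: "Side X P D ED A EA" and ab: "(a, b) \<in> EA"
  shows "\<exists>u v. u \<in> X \<and> v \<in> X \<and> (u, v) \<in> EG \<and> P u = a \<and> P v = b"
proof -
  have abA: "a \<in> A" "b \<in> A" "(a, b) \<in> ED" using ab SideD(4)[OF S] by auto
  have gD: "graph D ED" using fcg_graph[OF SideD(2)[OF S]] .
  have ba: "(b, a) \<in> ED" using gD abA(3) unfolding graph_def by blast
  have dc: "dconn ED {a, b}" by (rule dconn_pair[OF abA(3) ba])
  obtain v0 where v0: "v0 \<in> X" "P v0 = a" using side_image[OF S] abA(1) by (metis imageE)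
  define K where "K = comp (top_of_set VG) EG (VG \<inter> P -` {a, b}) v0"
  have Q: "{a, b} \<subseteq> A" using abA by simp
  have KX: "K \<subseteq> X" and PK: "P ` K = {a, b}" unfolding K_def using side_comp[OF S v0(1) Q dc] v0(2) by simp_all
  have vQ: "v0 \<in> VG \<inter> P -` {a, b}" using v0 side_XVG[OF S] by auto
  note Kc = comp_gcomponent[OF vQ, of "top_of_set VG" EG]
  have KVG: "K \<subseteq> VG" using KX side_XVG[OF S] by auto
  show ?thesis
  proof (cases "a = b")
    case True
    have "v0 \<in> VG" using KVG Kc(2) unfolding K_def by auto
    then show ?thesis using v0 True EG_refl by blast
  next
    case False
    have c1: "closedin (subtopology (top_of_set VG) K) (K \<inter> (VG \<inter> P -` {a}))"
      by (rule split_closedin[OF conf_closedin[OF SideD(1)[OF S]] KVG])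
    have c2: "closedin (subtopology (top_of_set VG) K) (K \<inter> (VG \<inter> P -` {b}))"
      by (rule split_closedin[OF conf_closedin[OF SideD(1)[OF S]] KVG])
    have "a \<in> P ` K" using PK by simp
    then obtain xa where xa: "xa \<in> K" "P xa = a" by (metis imageE)
    have ne1: "K \<inter> (VG \<inter> P -` {a}) \<noteq> {}" using xa KVG by auto
    have "b \<in> P ` K" using PK by simp
    then obtain xb where xb: "xb \<in> K" "P xb = b" by (metis imageE)
    have ne2: "K \<inter> (VG \<inter> P -` {b}) \<noteq> {}" using xb KVG by auto
    have ab2: "P x = a \<or> P x = b" if "x \<in> K" for x
    proof -
      have "P x \<in> P ` K" using that by (rule imageI)
      then show ?thesis using PK by simp
    qed
    have un: "(K \<inter> (VG \<inter> P -` {a})) \<union> (K \<inter> (VG \<inter> P -` {b})) = K" using ab2 KVG by auto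
    have di: "(K \<inter> (VG \<inter> P -` {a})) \<inter> (K \<inter> (VG \<inter> P -` {b})) = {}" using False by auto
    have "\<not> (\<forall>x\<in>K \<inter> (VG \<inter> P -` {a}). \<forall>y\<in>K \<inter> (VG \<inter> P -` {b}). (x, y) \<notin> EG)"
      using gconnectedD[OF gcomponentD(2)[OF Kc(1)] _ _ _ _ _ _] c1 c2 ne1 ne2 un di unfolding K_def by blast
    then obtain x y where "x \<in> K" "P x = a" "y \<in> K" "P y = b" "(x, y) \<in> EG" by auto
    then show ?thesis using KX by blast
  qed
qed

lemma side_fcg: "Side X P D ED A EA \<Longrightarrow> finite_connected_graph A EA"
proof -
  assume S: "Side X P D ED A EA"
  have "finite A" using SideD(3)[OF S] SideD(2)[OF S] unfolding finite_connected_graph_def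
    using finite_subset by blast
  moreover have "graph A EA" using fcg_graph[OF SideD(2)[OF S]] SideD(4)[OF S] SideD(3)[OF S]
    unfolding graph_def by auto
  moreover have "gconnected (discrete_topology A) EA A" using gconnected_discrete[of A A] SideD(6)[OF S] by simp
  ultimately show ?thesis using SideD(5)[OF S] unfolding finite_connected_graph_def by simp
qed

end


context FL begin

lemma factor:
  assumes S: "Side X P D ED A EA"
    and k: "confluent (top_of_set VG) EG (discrete_topology C) EC k" and fC: "finite_connected_graph C EC"
    and fac: "\<forall>u\<in>VG. P u = \<psi> (k u)"
  shows "Side X k C EC (k ` X) (EC \<inter> (k ` X) \<times> (k ` X))"
    "confluent (discrete_topology (k ` X)) (EC \<inter> (k ` X) \<times> (k ` X)) (discrete_topology A) EA \<psi>"
proof -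
  define A1 where "A1 = k ` X"
  define EA1 where "EA1 = EC \<inter> A1 \<times> A1"
  have XVG: "X \<subseteq> VG" "X \<subseteq> VG \<inter> P -` A" using side_XVG[OF S] by auto
  have A1C: "A1 \<subseteq> C" unfolding A1_def using XVG(1) conf_maps[OF k] by auto
  have A1ne: "A1 \<noteq> {}" unfolding A1_def using side_ne[OF S] by simp
  have kedge: "\<forall>a b. (a, b) \<in> EG \<longrightarrow> (k a, k b) \<in> EC" using conf_edge[OF k] by blast
  have "dconn EC A1" unfolding A1_def
    by (rule image_gconnected[OF conf_cont[OF k] kedge side_conn[OF S]]) (use XVG in simp)
  then have dA1: "dconn EA1 A1" unfolding EA1_def using dconn_Int[of A1 A1 EC] by simp
  have psiA: "\<psi> c \<in> A" if cA: "c \<in> A1" for c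
  proof -
    obtain x where x: "x \<in> X" "c = k x" using cA unfolding A1_def by blast
    then have "\<psi> c = P x" using fac XVG(1) by auto
    then show ?thesis using x(1) XVG(2) by auto
  qed
  have sub2: "VG \<inter> k -` A1 \<subseteq> VG \<inter> P -` A"
  proof
    fix u assume u: "u \<in> VG \<inter> k -` A1"
    then have "\<psi> (k u) \<in> A" using psiA by auto
    then show "u \<in> VG \<inter> P -` A" using u fac by auto
  qed
  have sub1: "X \<subseteq> VG \<inter> k -` A1" unfolding A1_def using XVG(1) by auto
  have gc: "gcomponent (top_of_set VG) EG (VG \<inter> k -` A1) X"
    by (rule gcomponent_mono[OF SideD7[OF S] sub1 sub2])
  show "Side X k C EC (k ` X) (EC \<inter> (k ` X) \<times> (k ` X))"
    unfolding Side_def using k fC A1C EA1_def A1ne dA1 gc unfolding A1_def by simp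
  have psiimg: "\<psi> ` A1 = A"
  proof -
    have "\<psi> ` A1 = P ` X" unfolding A1_def image_image using fac XVG(1) by (auto intro!: image_cong)
    then show ?thesis using side_image[OF S] by simp
  qed
  have psiedge: "(\<psi> c, \<psi> c') \<in> EA" if "(c, c') \<in> EA1" for c c'
  proof -
    have cc: "c \<in> A1" "c' \<in> A1" "(c, c') \<in> EC" using that unfolding EA1_def by auto
    obtain w w' where w: "(w, w') \<in> EG" "k w = c" "k w' = c'" using conf_edge_surj[OF k cc(3)] by blast
    have "w \<in> VG" "w' \<in> VG" using w(1) EG_sub by auto
    then have "(\<psi> c, \<psi> c') = (P w, P w')" using fac w by auto
    moreover have "(P w, P w') \<in> ED" using conf_edge[OF SideD1[OF S] w(1)] .
    moreover have "\<psi> c \<in> A" "\<psi> c' \<in> A" using psiA cc by auto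
    ultimately show ?thesis using SideD4[OF S] by simp
  qed
  have epi: "epimorphism (discrete_topology A1) EA1 (discrete_topology A) EA \<psi>"
    unfolding epimorphism_def
  proof (intro conjI allI impI)
    show "continuous_map (discrete_topology A1) (discrete_topology A) \<psi>" using psiA by auto
    show "\<psi> ` topspace (discrete_topology A1) = topspace (discrete_topology A)" using psiimg by simp
    fix a b assume "(a, b) \<in> EA1" then show "(\<psi> a, \<psi> b) \<in> EA" by (rule psiedge)
  next
    show "(\<lambda>(a, b). (\<psi> a, \<psi> b)) ` EA1 = EA"
    proof
      show "(\<lambda>(a, b). (\<psi> a, \<psi> b)) ` EA1 \<subseteq> EA" using psiedge by auto
      show "EA \<subseteq> (\<lambda>(a, b). (\<psi> a, \<psi> b)) ` EA1"
      proof
        fix e assume e: "e \<in> EA"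
        obtain a b where ab: "e = (a, b)" by (cases e)
        obtain u v where uv: "u \<in> X" "v \<in> X" "(u, v) \<in> EG" "P u = a" "P v = b"
          using side_edges[OF S] e ab by blast
        have "(k u, k v) \<in> EA1" unfolding EA1_def A1_def using uv conf_edge[OF k uv(3)] by auto
        moreover have "(\<psi> (k u), \<psi> (k v)) = e" using uv fac XVG(1) ab by auto
        ultimately show "e \<in> (\<lambda>(a, b). (\<psi> a, \<psi> b)) ` EA1" by force
      qed
    qed
  qed
  have conf: "\<forall>Q. Q \<subseteq> topspace (discrete_topology A) \<and> gconnected (discrete_topology A) EA Q \<longrightarrow>
        (\<forall>K. gcomponent (discrete_topology A1) EA1 (topspace (discrete_topology A1) \<inter> \<psi> -` Q) K \<longrightarrow> \<psi> ` K = Q)"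
  proof (intro allI impI, elim conjE)
    fix Q K assume QA: "Q \<subseteq> topspace (discrete_topology A)" and Qc: "gconnected (discrete_topology A) EA Q"
      and K: "gcomponent (discrete_topology A1) EA1 (topspace (discrete_topology A1) \<inter> \<psi> -` Q) K"
    have QA': "Q \<subseteq> A" using QA by simp
    have dQ: "dconn EA Q" using gconnected_discrete[OF QA'] Qc by simp
    have dQ': "dconn ED Q" using dQ SideD4[OF S] dconn_Int[OF QA', of ED] by simp
    show "\<psi> ` K = Q"
    proof
      show "\<psi> ` K \<subseteq> Q" using gcomponentD(1)[OF K] by auto
      show "Q \<subseteq> \<psi> ` K"
      proof (cases "Q = {}")
        case True then show ?thesis by simp
      next
        case False
        then obtain q where q: "q \<in> Q" by blast
        then obtain c0 where c0: "c0 \<in> A1" "\<psi> c0 = q" using psiimg QA' by (metis imageE subsetD)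
        have "topspace (discrete_topology A1) \<inter> \<psi> -` Q \<noteq> {}" using c0 q by auto
        then have "K \<noteq> {}" by (rule gcomponent_nonempty[OF K])
        then obtain c where cK: "c \<in> K" by blast
        have cA1: "c \<in> A1" "\<psi> c \<in> Q" using gcomponentD(1)[OF K] cK by auto
        obtain v where v: "v \<in> X" "c = k v" using cA1(1) unfolding A1_def by blast
        have Pv: "P v \<in> Q" using fac v XVG(1) cA1(2) by auto
        define L where "L = comp (top_of_set VG) EG (VG \<inter> P -` Q) v"
        have LX: "L \<subseteq> X" and PL: "P ` L = Q" unfolding L_def using side_comp[OF S v(1) QA' dQ' Pv] by simp_all
        have vQ: "v \<in> VG \<inter> P -` Q" using v(1) XVG(1) Pv by auto
        note Lc = comp_gcomponent[OF vQ, of "top_of_set VG" EG]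
        have Lconn: "gconnected (top_of_set VG) EG L" unfolding L_def by (rule gcomponentD(2)[OF Lc(1)])
        have "dconn EC (k ` L)"
          by (rule image_gconnected[OF conf_cont[OF k] kedge Lconn]) (use LX XVG(1) in auto)
        moreover have kLA1: "k ` L \<subseteq> A1" unfolding A1_def using LX by auto
        ultimately have dkL: "dconn EA1 (k ` L)" unfolding EA1_def using dconn_Int[of "k ` L" A1 EC] by simp
        have kLsub: "k ` L \<subseteq> topspace (discrete_topology A1) \<inter> \<psi> -` Q"
        proof
          fix c' assume "c' \<in> k ` L"
          then obtain u where u: "u \<in> L" "c' = k u" by blast
          have "u \<in> VG" using u(1) LX XVG(1) by auto
          then have "\<psi> c' = P u" using fac u by auto
          moreover have "P u \<in> Q" using PL u(1) by auto
          ultimately show "c' \<in> topspace (discrete_topology A1) \<inter> \<psi> -` Q" using kLA1 \<open>c' \<in> k ` L\<close> by auto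
        qed
        have "k ` L \<subseteq> A1" by (rule kLA1)
        then have "gconnected (discrete_topology A1) EA1 (k ` L)" using gconnected_discrete dkL by blast
        moreover have "k ` L \<inter> K \<noteq> {}"
        proof -
          have "v \<in> L" using Lc(2) unfolding L_def .
          then show ?thesis using cK v(2) by auto
        qed
        ultimately have "k ` L \<subseteq> K" using gcomponent_absorb[OF K kLsub] by simp
        then have "\<psi> ` (k ` L) \<subseteq> \<psi> ` K" by (rule image_mono)
        moreover have "\<psi> ` (k ` L) = P ` L"
          unfolding image_image using fac LX XVG(1) by (auto intro!: image_cong)
        ultimately show ?thesis using PL by simp
      qed
    qed
  qed
  show "confluent (discrete_topology (k ` X)) (EC \<inter> (k ` X) \<times> (k ` X)) (discrete_topology A) EA \<psi>"
    using epi conf unfolding confluent_def A1_def EA1_def by simp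
qed

end


lemma dcomp_absorb:
  assumes "gcomponent (discrete_topology D) E S K" "T \<subseteq> S" "S \<subseteq> D" "dconn E T" "T \<inter> K \<noteq> {}"
  shows "T \<subseteq> K"
proof -
  have "T \<subseteq> D" using assms(2,3) by (rule subset_trans)
  then have "gconnected (discrete_topology D) E T" using gconnected_discrete assms(4) by blast
  then show ?thesis using gcomponent_absorb[OF assms(1,2) _ assms(5)] by simp
qed

lemma dcomp:
  assumes "v \<in> S" "S \<subseteq> D"
  shows "gcomponent (discrete_topology D) E S (comp (discrete_topology D) E S v)"
    "v \<in> comp (discrete_topology D) E S v" "dconn E (comp (discrete_topology D) E S v)"
    "comp (discrete_topology D) E S v \<subseteq> S"
proof -
  show K: "gcomponent (discrete_topology D) E S (comp (discrete_topology D) E S v)"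
    "v \<in> comp (discrete_topology D) E S v" using comp_gcomponent[OF assms(1)] by simp_all
  show sub: "comp (discrete_topology D) E S v \<subseteq> S" using gcomponentD(1)[OF K(1)] .
  have "comp (discrete_topology D) E S v \<subseteq> D" using sub assms(2) by (rule subset_trans)
  then show "dconn E (comp (discrete_topology D) E S v)"
    using gconnected_discrete gcomponentD(2)[OF K(1)] by blast
qed

lemma conf_discrete:
  assumes "confluent (discrete_topology A1) EA1 (discrete_topology A) EA \<psi>"
  shows "\<And>c. c \<in> A1 \<Longrightarrow> \<psi> c \<in> A" "\<psi> ` A1 = A"
    "\<And>a b. (a, b) \<in> EA1 \<Longrightarrow> (\<psi> a, \<psi> b) \<in> EA"
    "\<And>a b. (a, b) \<in> EA \<Longrightarrow> \<exists>c d. (c, d) \<in> EA1 \<and> \<psi> c = a \<and> \<psi> d = b"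
    "\<And>Q K. Q \<subseteq> A \<Longrightarrow> dconn EA Q \<Longrightarrow> gcomponent (discrete_topology A1) EA1 (A1 \<inter> \<psi> -` Q) K \<Longrightarrow> \<psi> ` K = Q"
proof -
  have epi: "epimorphism (discrete_topology A1) EA1 (discrete_topology A) EA \<psi>" using conf_epi[OF assms] .
  show img: "\<psi> ` A1 = A" using epi unfolding epimorphism_def by simp
  show "\<And>c. c \<in> A1 \<Longrightarrow> \<psi> c \<in> A" using img by blast
  show "\<And>a b. (a, b) \<in> EA1 \<Longrightarrow> (\<psi> a, \<psi> b) \<in> EA" using conf_edge[OF assms] by blast
  show "\<And>a b. (a, b) \<in> EA \<Longrightarrow> \<exists>c d. (c, d) \<in> EA1 \<and> \<psi> c = a \<and> \<psi> d = b" using conf_edge_surj[OF assms] by blast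
  have H: "\<forall>Q. Q \<subseteq> topspace (discrete_topology A) \<and> gconnected (discrete_topology A) EA Q \<longrightarrow>
        (\<forall>C. gcomponent (discrete_topology A1) EA1 (topspace (discrete_topology A1) \<inter> \<psi> -` Q) C \<longrightarrow> \<psi> ` C = Q)"
    using assms unfolding confluent_def by (elim conjE)
  fix Q K assume Q: "Q \<subseteq> A" "dconn EA Q" and K: "gcomponent (discrete_topology A1) EA1 (A1 \<inter> \<psi> -` Q) K"
  have "Q \<subseteq> topspace (discrete_topology A) \<and> gconnected (discrete_topology A) EA Q"
    using Q gconnected_discrete[OF Q(1)] by simp
  moreover have "gcomponent (discrete_topology A1) EA1 (topspace (discrete_topology A1) \<inter> \<psi> -` Q) K" using K by simp
  ultimately show "\<psi> ` K = Q" using H by blast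
qed



lemma glue:
  fixes A1 A D' :: "nat set"
  assumes fD: "finite_connected_graph D' ED'" and AD: "A \<subseteq> D'" and EAdef: "EA = ED' \<inter> A \<times> A"
    and conf: "confluent (discrete_topology A1) EA1 (discrete_topology A) EA \<psi>"
    and fA1: "finite_connected_graph A1 EA1"
  shows "\<exists>D'' ED'' \<phi>. finite_connected_graph D'' ED'' \<and> confluent (discrete_topology D'') ED'' (discrete_topology D') ED' \<phi>
     \<and> A1 \<subseteq> D'' \<and> ED'' \<inter> A1 \<times> A1 = EA1 \<and> (\<forall>m\<in>D''. \<phi> m \<in> A \<longleftrightarrow> m \<in> A1) \<and> (\<forall>m\<in>A1. \<phi> m = \<psi> m)"
proof -
  note cd = conf_discrete[OF conf]
  have finA1: "finite A1" and neA1: "A1 \<noteq> {}" using fA1 unfolding finite_connected_graph_def by simp_all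
  have gA1: "graph A1 EA1" using fA1 unfolding finite_connected_graph_def by simp
  have gD: "graph D' ED'" using fD unfolding finite_connected_graph_def by simp
  have finD: "finite D'" using fD unfolding finite_connected_graph_def by simp
  have dA1: "dconn EA1 A1" using fcg_dconn[OF fA1] .
  have dD: "dconn ED' D'" using fcg_dconn[OF fD] .
  have EA1sub: "EA1 \<subseteq> A1 \<times> A1" using gA1 unfolding graph_def by simp
  have EA1sym: "(a, b) \<in> EA1 \<Longrightarrow> (b, a) \<in> EA1" for a b using gA1 unfolding graph_def by blast
  have EA1refl: "a \<in> A1 \<Longrightarrow> (a, a) \<in> EA1" for a using gA1 unfolding graph_def by blast
  have EDsub: "ED' \<subseteq> D' \<times> D'" using gD unfolding graph_def by simp
  have EDsym: "(a, b) \<in> ED' \<Longrightarrow> (b, a) \<in> ED'" for a b using gD unfolding graph_def by blast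
  have EDrefl: "a \<in> D' \<Longrightarrow> (a, a) \<in> ED'" for a using gD unfolding graph_def by blast
  define M where "M = Suc (Max A1)"
  have ltM: "m < M" if "m \<in> A1" for m unfolding M_def using Max_ge[OF finA1 that] by simp
  define Ob where "Ob = (\<lambda>d. d + M) ` (D' - A)"
  define D'' where "D'' = A1 \<union> Ob"
  define \<phi> where "\<phi> m = (if m \<in> A1 then \<psi> m else m - M)" for m
  define ED'' where "ED'' = {(m, n). m \<in> D'' \<and> n \<in> D'' \<and> (if m \<in> A1 \<and> n \<in> A1 then (m, n) \<in> EA1 else (\<phi> m, \<phi> n) \<in> ED')}"
  have Ob_notA1: "m \<notin> A1" if "m \<in> Ob" for m
  proof
    assume "m \<in> A1"
    then have "m < M" by (rule ltM)
    moreover have "m \<ge> M" using that unfolding Ob_def by auto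
    ultimately show False by simp
  qed
  have phiO: "\<phi> (d + M) = d" "d + M \<in> Ob" "d + M \<notin> A1" if "d \<in> D' - A" for d
  proof -
    show dO: "d + M \<in> Ob" unfolding Ob_def using that by blast
    show "d + M \<notin> A1" by (rule Ob_notA1[OF dO])
    then show "\<phi> (d + M) = d" unfolding \<phi>_def by simp
  qed
  have phiO2: "\<phi> m \<in> D' - A" "m = \<phi> m + M" if mOb: "m \<in> Ob" for m
  proof -
    obtain d where d: "d \<in> D' - A" "m = d + M" using mOb unfolding Ob_def by blast
    then show "\<phi> m \<in> D' - A" "m = \<phi> m + M" using phiO[OF d(1)] by simp_all
  qed
  have phiA1: "\<phi> m = \<psi> m" if "m \<in> A1" for m using that unfolding \<phi>_def by simp
  have phiD: "\<phi> m \<in> D'" if "m \<in> D''" for m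
  proof (cases "m \<in> A1")
    case True then show ?thesis using phiA1 cd(1) AD by auto
  next
    case False then have "m \<in> Ob" using that unfolding D''_def by simp
    then show ?thesis using phiO2 by auto
  qed
  have phiA: "\<phi> m \<in> A \<longleftrightarrow> m \<in> A1" if "m \<in> D''" for m
  proof (cases "m \<in> A1")
    case True then show ?thesis using phiA1 cd(1) by auto
  next
    case False then have "m \<in> Ob" using that unfolding D''_def by simp
    then show ?thesis using phiO2 False by auto
  qed
  have phiimg: "\<phi> ` D'' = D'"
  proof
    show "\<phi> ` D'' \<subseteq> D'" using phiD by auto
    show "D' \<subseteq> \<phi> ` D''"
    proof
      fix d assume d: "d \<in> D'"
      show "d \<in> \<phi> ` D''"
      proof (cases "d \<in> A")
        case True
        then obtain c where "c \<in> A1" "\<psi> c = d" using cd(2) by (metis imageE)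
        then show ?thesis using phiA1 unfolding D''_def by (metis UnI1 imageI)
      next
        case False
        then have "d \<in> D' - A" using d by simp
        then show ?thesis using phiO unfolding D''_def by (metis UnI2 imageI)
      qed
    qed
  qed
  have A1D: "A1 \<subseteq> D''" unfolding D''_def by simp
  have ED''mem: "(m, n) \<in> ED'' \<longleftrightarrow> m \<in> D'' \<and> n \<in> D'' \<and> (if m \<in> A1 \<and> n \<in> A1 then (m, n) \<in> EA1 else (\<phi> m, \<phi> n) \<in> ED')" for m n
    unfolding ED''_def by simp
  have ED''A1: "ED'' \<inter> A1 \<times> A1 = EA1"
  proof
    show "ED'' \<inter> A1 \<times> A1 \<subseteq> EA1" using ED''mem by auto
    show "EA1 \<subseteq> ED'' \<inter> A1 \<times> A1"
    proof
      fix e assume e: "e \<in> EA1"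
      obtain m n where mn: "e = (m, n)" by (cases e)
      have "m \<in> A1" "n \<in> A1" using e mn EA1sub by auto
      then show "e \<in> ED'' \<inter> A1 \<times> A1" using e mn A1D ED''mem by auto
    qed
  qed
  have ED''sym: "(n, m) \<in> ED''" if "(m, n) \<in> ED''" for m n
    using that EA1sym EDsym unfolding ED''mem by auto
  have phiedge: "(\<phi> m, \<phi> n) \<in> ED'" if "(m, n) \<in> ED''" for m n
  proof (cases "m \<in> A1 \<and> n \<in> A1")
    case True
    then have "(m, n) \<in> EA1" using that ED''mem by simp
    then have "(\<psi> m, \<psi> n) \<in> EA" by (rule cd(3))
    then show ?thesis using True phiA1 EAdef by auto
  next
    case False then show ?thesis using that ED''mem by simp
  qed
  have graphD'': "graph D'' ED''" unfolding graph_def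
  proof (intro conjI allI impI ballI)
    show "ED'' \<subseteq> D'' \<times> D''" using ED''mem by auto
    fix v assume v: "v \<in> D''"
    show "(v, v) \<in> ED''"
    proof (cases "v \<in> A1")
      case True then show ?thesis using EA1refl v ED''mem by simp
    next
      case False then show ?thesis using EDrefl phiD v ED''mem by simp
    qed
  next
    fix a b assume "(a, b) \<in> ED''" then show "(b, a) \<in> ED''" by (rule ED''sym)
  qed
  have finD'': "finite D''" unfolding D''_def Ob_def using finA1 finD by simp
  have neD'': "D'' \<noteq> {}" using neA1 A1D by auto
  have dED''A1: "dconn ED'' A1" using dA1 dconn_Int[of A1 A1 ED''] ED''A1 by simp
  have half: False if ST: "A1 \<subseteq> Sx" "Tx \<noteq> {}" "Sx \<union> Tx = D''" "Sx \<inter> Tx = {}"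
      "\<forall>a\<in>Sx. \<forall>b\<in>Tx. (a, b) \<notin> ED''" for Sx Tx
  proof -
    have TO: "t \<in> Ob" if "t \<in> Tx" for t
    proof -
      have "t \<in> D''" using that ST(3) by auto
      moreover have "t \<notin> A1" using that ST(1,4) by auto
      ultimately show ?thesis unfolding D''_def by simp
    qed
    have "\<phi> ` Sx \<noteq> {}" using ST(1) neA1 by auto
    moreover have "\<phi> ` Tx \<noteq> {}" using ST(2) by auto
    moreover have "\<phi> ` Sx \<union> \<phi> ` Tx = D'" using phiimg ST(3) by (metis image_Un)
    moreover have "\<phi> ` Sx \<inter> \<phi> ` Tx = {}"
    proof (rule ccontr)
      assume "\<phi> ` Sx \<inter> \<phi> ` Tx \<noteq> {}"
      then obtain s t where st: "s \<in> Sx" "t \<in> Tx" "\<phi> s = \<phi> t" by blast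
      have tO: "t \<in> Ob" using TO st(2) by simp
      have "\<phi> t \<notin> A" using phiO2(1)[OF tO] by simp
      then have "s \<notin> A1" using st(3) phiA1 cd(1) by metis
      moreover have "s \<in> D''" using st(1) ST(3) by auto
      ultimately have sO: "s \<in> Ob" unfolding D''_def by simp
      have "s = t" using phiO2(2)[OF sO] phiO2(2)[OF tO] st(3) by simp
      then show False using st(1,2) ST(4) by auto
    qed
    moreover have "\<forall>a\<in>\<phi> ` Sx. \<forall>b\<in>\<phi> ` Tx. (a, b) \<notin> ED'"
    proof (intro ballI notI)
      fix a b assume ab: "a \<in> \<phi> ` Sx" "b \<in> \<phi> ` Tx" "(a, b) \<in> ED'"
      obtain s where s: "s \<in> Sx" "a = \<phi> s" using ab(1) by blast
      obtain t where t: "t \<in> Tx" "b = \<phi> t" using ab(2) by blast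
      have "t \<notin> A1" using TO[OF t(1)] Ob_notA1 by simp
      moreover have "s \<in> D''" "t \<in> D''" using s(1) t(1) ST(3) by auto
      ultimately have "(s, t) \<in> ED''" using ab(3) s(2) t(2) ED''mem by auto
      then show False using ST(5) s(1) t(1) by blast
    qed
    ultimately show False by (rule dconnD[OF dD])
  qed
  have dD'': "dconn ED'' D''" unfolding dconn_def
  proof
    assume "\<exists>Sx Tx. Sx \<noteq> {} \<and> Tx \<noteq> {} \<and> Sx \<union> Tx = D'' \<and> Sx \<inter> Tx = {} \<and> (\<forall>a\<in>Sx. \<forall>b\<in>Tx. (a, b) \<notin> ED'')"
    then obtain Sx Tx where ST: "Sx \<noteq> {}" "Tx \<noteq> {}" "Sx \<union> Tx = D''" "Sx \<inter> Tx = {}" "\<forall>a\<in>Sx. \<forall>b\<in>Tx. (a, b) \<notin> ED''"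
      by blast
    have A1sub: "A1 \<subseteq> Sx \<union> Tx" using ST(3) A1D by simp
    have "A1 \<subseteq> Sx \<or> A1 \<subseteq> Tx" by (rule dconn_side[OF dED''A1 A1sub ST(4) ST(5)])
    then show False
    proof
      assume "A1 \<subseteq> Sx" then show False using half[OF _ ST(2-5)] by simp
    next
      assume A1T: "A1 \<subseteq> Tx"
      have "Tx \<union> Sx = D''" using ST(3) by (simp add: Un_commute)
      moreover have "Tx \<inter> Sx = {}" using ST(4) by (simp add: Int_commute)
      moreover have "\<forall>a\<in>Tx. \<forall>b\<in>Sx. (a, b) \<notin> ED''" using ST(5) ED''sym by blast
      ultimately show False using half[OF A1T ST(1)] by simp
    qed
  qed
  have fD'': "finite_connected_graph D'' ED''"
    unfolding finite_connected_graph_def using finD'' neD'' graphD'' dD'' gconnected_discrete[of D'' D''] by simp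
  have epi: "epimorphism (discrete_topology D'') ED'' (discrete_topology D') ED' \<phi>"
    unfolding epimorphism_def
  proof (intro conjI allI impI)
    show "continuous_map (discrete_topology D'') (discrete_topology D') \<phi>" using phiD by auto
    show "\<phi> ` topspace (discrete_topology D'') = topspace (discrete_topology D')" using phiimg by simp
    fix a b assume "(a, b) \<in> ED''" then show "(\<phi> a, \<phi> b) \<in> ED'" by (rule phiedge)
  next
    show "(\<lambda>(a, b). (\<phi> a, \<phi> b)) ` ED'' = ED'"
    proof
      show "(\<lambda>(a, b). (\<phi> a, \<phi> b)) ` ED'' \<subseteq> ED'" using phiedge by auto
      show "ED' \<subseteq> (\<lambda>(a, b). (\<phi> a, \<phi> b)) ` ED''"
      proof
        fix e assume e: "e \<in> ED'"
        obtain a b where ab: "e = (a, b)" by (cases e)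
        have abD: "a \<in> D'" "b \<in> D'" using e ab EDsub by auto
        show "e \<in> (\<lambda>(a, b). (\<phi> a, \<phi> b)) ` ED''"
        proof (cases "a \<in> A \<and> b \<in> A")
          case True
          then have "(a, b) \<in> EA" using e ab EAdef by simp
          then obtain c d where cd': "(c, d) \<in> EA1" "\<psi> c = a" "\<psi> d = b" using cd(4) by blast
          have "c \<in> A1" "d \<in> A1" using cd'(1) EA1sub by auto
          then have "(c, d) \<in> ED''" "\<phi> c = a" "\<phi> d = b" using cd' ED''A1 phiA1 by auto
          then show ?thesis using ab by force
        next
          case False
          obtain m where m: "m \<in> D''" "\<phi> m = a" using phiimg abD(1) by (metis imageE)
          obtain n where n: "n \<in> D''" "\<phi> n = b" using phiimg abD(2) by (metis imageE)
          have "\<not> (m \<in> A1 \<and> n \<in> A1)" using False m n phiA by auto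
          then have "(m, n) \<in> ED''" using m n e ab ED''mem by auto
          then show ?thesis using ab m n by force
        qed
      qed
    qed
  qed
  have conf2: "\<phi> ` K = Q" if Q: "Q \<subseteq> D'" "dconn ED' Q" and K: "gcomponent (discrete_topology D'') ED'' (D'' \<inter> \<phi> -` Q) K" for Q K
  proof -
    have KS: "K \<subseteq> D'' \<inter> \<phi> -` Q" using gcomponentD(1)[OF K] .
    have SQ: "D'' \<inter> \<phi> -` Q \<subseteq> D''" by simp
    have absorb: "T \<subseteq> K" if "T \<subseteq> D'' \<inter> \<phi> -` Q" "dconn ED'' T" "T \<inter> K \<noteq> {}" for T
      by (rule dcomp_absorb[OF K that(1) SQ that(2,3)])
    have pairK: "n \<in> K" if "m \<in> K" "n \<in> D'' \<inter> \<phi> -` Q" "(m, n) \<in> ED''" for m n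
    proof -
      have "dconn ED'' {m, n}" using dconn_pair[OF that(3) ED''sym[OF that(3)]] .
      moreover have "{m, n} \<subseteq> D'' \<inter> \<phi> -` Q" using that(1,2) KS by auto
      ultimately have "{m, n} \<subseteq> K" using absorb that(1) by blast
      then show ?thesis by simp
    qed
    have close: "t \<in> \<phi> ` K" if st: "s \<in> \<phi> ` K" "t \<in> Q" "(s, t) \<in> ED'" for s t
    proof -
      obtain m where m: "m \<in> K" "s = \<phi> m" using st(1) by blast
      have mD: "m \<in> D''" using m(1) KS by auto
      have tD: "t \<in> D'" using st(2) Q(1) by auto
      show ?thesis
      proof (cases "t \<in> A")
        case False
        then have tDA: "t \<in> D' - A" using tD by simp
        define n where "n = t + M"
        have nD: "n \<in> D''" "\<phi> n = t" "n \<notin> A1" unfolding n_def D''_def using phiO[OF tDA] by auto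
        have "(m, n) \<in> ED''" using mD nD st(3) m(2) ED''mem by auto
        then have "n \<in> K" using pairK[OF m(1)] nD st(2) by auto
        then show ?thesis using nD(2) by (metis imageI)
      next
        case tA: True
        show ?thesis
        proof (cases "m \<in> A1")
          case False
          obtain c where c: "c \<in> A1" "\<psi> c = t" using cd(2) tA by (metis imageE)
          have cD: "c \<in> D''" "\<phi> c = t" using c A1D phiA1 by auto
          have "(m, c) \<in> ED''" using mD cD False st(3) m(2) ED''mem by auto
          then have "c \<in> K" using pairK[OF m(1)] cD st(2) by auto
          then show ?thesis using cD(2) by (metis imageI)
        next
          case mA1: True
          have sA: "s = \<psi> m" "s \<in> A" using m(2) phiA1[OF mA1] cd(1)[OF mA1] by auto
          have sQ: "s \<in> Q" using m KS by auto
          have AQ: "A \<inter> Q \<subseteq> A" by simp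
          define R where "R = comp (discrete_topology A) EA (A \<inter> Q) s"
          have sAQ: "s \<in> A \<inter> Q" using sA sQ by simp
          note Rc = dcomp[OF sAQ AQ, of EA, folded R_def]
          have stEA: "(s, t) \<in> EA" "(t, s) \<in> EA" using st(3) EDsym[OF st(3)] sA tA EAdef by auto
          have "{s, t} \<subseteq> R"
            by (rule dcomp_absorb[OF Rc(1) _ AQ dconn_pair[OF stEA]]) (use sAQ tA st(2) Rc(2) in auto)
          then have tR: "t \<in> R" by simp
          have RA: "R \<subseteq> A" using Rc(4) by auto
          have mR: "m \<in> A1 \<inter> \<psi> -` R" using mA1 sA(1) Rc(2) by auto
          have A1R: "A1 \<inter> \<psi> -` R \<subseteq> A1" by simp
          define L where "L = comp (discrete_topology A1) EA1 (A1 \<inter> \<psi> -` R) m"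
          note Lc = dcomp[OF mR A1R, of EA1, folded L_def]
          have psiL: "\<psi> ` L = R" by (rule cd(5)[OF RA Rc(3) Lc(1)])
          have LA1: "L \<subseteq> A1" using Lc(4) by auto
          have LS: "L \<subseteq> D'' \<inter> \<phi> -` Q"
          proof
            fix l assume l: "l \<in> L"
            then have "l \<in> A1" "\<psi> l \<in> R" using Lc(4) by auto
            then show "l \<in> D'' \<inter> \<phi> -` Q" using A1D phiA1 Rc(4) by auto
          qed
          have "dconn ED'' L" using Lc(3) dconn_Int[OF LA1, of ED''] ED''A1 by simp
          moreover have "L \<inter> K \<noteq> {}" using Lc(2) m(1) by auto
          ultimately have LK: "L \<subseteq> K" using absorb LS by blast
          have "t \<in> \<psi> ` L" using tR psiL by simp
          then obtain l where l: "l \<in> L" "t = \<psi> l" by blast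
          then have "t = \<phi> l" using phiA1 LA1 by auto
          then show ?thesis using l(1) LK by auto
        qed
      qed
    qed
    show "\<phi> ` K = Q"
    proof (rule ccontr)
      assume neq: "\<phi> ` K \<noteq> Q"
      have sub: "\<phi> ` K \<subseteq> Q" using KS by auto
      show False
      proof (cases "Q = {}")
        case True then show False using sub neq by simp
      next
        case False
        then obtain q where q: "q \<in> Q" by blast
        then obtain m where "m \<in> D''" "\<phi> m = q" using phiimg Q(1) by (metis imageE subsetD)
        then have "D'' \<inter> \<phi> -` Q \<noteq> {}" using q by auto
        then have "K \<noteq> {}" by (rule gcomponent_nonempty[OF K])
        then have "\<phi> ` K \<noteq> {}" by simp
        moreover have "Q - \<phi> ` K \<noteq> {}" using sub neq by auto
        moreover have "\<phi> ` K \<union> (Q - \<phi> ` K) = Q" using sub by auto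
        moreover have "\<phi> ` K \<inter> (Q - \<phi> ` K) = {}" by auto
        moreover have "\<forall>a\<in>\<phi> ` K. \<forall>b\<in>Q - \<phi> ` K. (a, b) \<notin> ED'" using close by blast
        ultimately show False by (rule dconnD[OF Q(2)])
      qed
    qed
  qed
  have conf': "confluent (discrete_topology D'') ED'' (discrete_topology D') ED' \<phi>"
    unfolding confluent_def
  proof (intro conjI allI impI, rule epi, elim conjE)
    fix Q C assume Q1: "Q \<subseteq> topspace (discrete_topology D')" and Q2: "gconnected (discrete_topology D') ED' Q"
      and C: "gcomponent (discrete_topology D'') ED'' (topspace (discrete_topology D'') \<inter> \<phi> -` Q) C"
    have QD: "Q \<subseteq> D'" using Q1 by simp
    show "\<phi> ` C = Q" by (rule conf2[OF QD]) (use Q2 gconnected_discrete[OF QD] C in simp_all)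
  qed
  show ?thesis
    by (intro exI[of _ D''] exI[of _ ED''] exI[of _ \<phi>] conjI fD'' conf' A1D ED''A1 ballI phiA1)
      (use phiA in blast)
qed



context FL begin

definition mesh :: "'a set \<Rightarrow> ('a \<Rightarrow> nat) \<Rightarrow> real \<Rightarrow> bool" where
  "mesh X P e \<longleftrightarrow> (\<forall>u\<in>X. \<forall>v\<in>X. P u = P v \<longrightarrow> dist u v < e)"

lemma refine:
  assumes SX: "Side X P D ED A EA" and SY: "Side Y Q D' ED' A EA" and e: "\<epsilon> > 0"
  shows "\<exists>P1 D1 ED1 Q1 D1' ED1' A1 EA1 \<psi>. Side X P1 D1 ED1 A1 EA1 \<and> Side Y Q1 D1' ED1' A1 EA1
    \<and> (\<forall>u\<in>X. P u = \<psi> (P1 u)) \<and> (\<forall>u\<in>Y. Q u = \<psi> (Q1 u)) \<and> mesh X P1 \<epsilon>"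
proof -
  note cP = SideD1[OF SX]
  obtain \<delta> where d: "\<delta> > 0" "\<forall>u\<in>VG. \<forall>v\<in>VG. dist u v < \<delta> \<longrightarrow> P u = P v"
    using unif_partition[OF VG_compact, of P] conf_openin[OF cP] by blast
  have md: "min \<epsilon> \<delta> > 0" using e d(1) by simp
  obtain C EC k where k: "finite_connected_graph C EC" "confluent (top_of_set VG) EG (discrete_topology C) EC k"
    "\<forall>a\<in>C. diameter (VG \<inter> k -` {a}) < min \<epsilon> \<delta>"
    using ex3[OF md] by blast
  have kdist: "dist u v < min \<epsilon> \<delta>" if "u \<in> VG" "v \<in> VG" "k u = k v" for u v
  proof -
    have "k u \<in> C" using conf_maps[OF k(2) that(1)] .
    have "dist u v \<le> diameter (VG \<inter> k -` {k u})" by (rule diam_bound) (use that in auto)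
    also have "\<dots> < min \<epsilon> \<delta>" using k(3) \<open>k u \<in> C\<close> by blast
    finally show ?thesis .
  qed
  define \<psi> where "\<psi> c = P (SOME u. u \<in> VG \<and> k u = c)" for c
  have fac: "\<forall>u\<in>VG. P u = \<psi> (k u)"
  proof
    fix u assume u: "u \<in> VG"
    define w where "w = (SOME w. w \<in> VG \<and> k w = k u)"
    have w: "w \<in> VG \<and> k w = k u" unfolding w_def by (rule someI[of _ u]) (use u in simp)
    then have "dist u w < \<delta>" using kdist[of u w] u by simp
    then have "P u = P w" using d(2) u w by blast
    then show "P u = \<psi> (k u)" unfolding \<psi>_def w_def by simp
  qed
  define A1 where "A1 = k ` X"
  define EA1 where "EA1 = EC \<inter> A1 \<times> A1"
  have SX1: "Side X k C EC A1 EA1" and cpsi: "confluent (discrete_topology A1) EA1 (discrete_topology A) EA \<psi>"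
    using factor[OF SX k(2) k(1) fac] unfolding A1_def EA1_def by simp_all
  have fA1: "finite_connected_graph A1 EA1" using side_fcg[OF SX1] .
  obtain D'' ED'' \<phi> where gl: "finite_connected_graph D'' ED''" "confluent (discrete_topology D'') ED'' (discrete_topology D') ED' \<phi>"
    "A1 \<subseteq> D''" "ED'' \<inter> A1 \<times> A1 = EA1" "\<forall>m\<in>D''. \<phi> m \<in> A \<longleftrightarrow> m \<in> A1" "\<forall>m\<in>A1. \<phi> m = \<psi> m"
    using glue[OF SideD2[OF SY] SideD3[OF SY] SideD4[OF SY] cpsi fA1] by blast
  obtain Q1 where Q1: "confluent (top_of_set VG) EG (discrete_topology D'') ED'' Q1" "\<forall>x\<in>VG. Q x = \<phi> (Q1 x)"
    using ex2[OF SideD2[OF SY] gl(1) SideD1[OF SY] gl(2)] by blast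
  have seteq: "VG \<inter> Q1 -` A1 = VG \<inter> Q -` A"
  proof (rule set_eqI)
    fix u
    show "u \<in> VG \<inter> Q1 -` A1 \<longleftrightarrow> u \<in> VG \<inter> Q -` A"
    proof (cases "u \<in> VG")
      case True
      have "Q1 u \<in> D''" using conf_maps[OF Q1(1) True] .
      then have "Q1 u \<in> A1 \<longleftrightarrow> \<phi> (Q1 u) \<in> A" using gl(5) by simp
      then show ?thesis using Q1(2) True by simp
    next
      case False then show ?thesis by simp
    qed
  qed
  have SY1: "Side Y Q1 D'' ED'' A1 EA1" unfolding Side_def
  proof (intro conjI)
    show "confluent (top_of_set VG) EG (discrete_topology D'') ED'' Q1" by (rule Q1(1))
    show "finite_connected_graph D'' ED''" by (rule gl(1))
    show "A1 \<subseteq> D''" by (rule gl(3))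
    show "EA1 = ED'' \<inter> A1 \<times> A1" using gl(4) by simp
    show "A1 \<noteq> {}" by (rule SideD5[OF SX1])
    show "dconn EA1 A1" by (rule SideD6[OF SX1])
    show "gcomponent (top_of_set VG) EG (VG \<inter> Q1 -` A1) Y" unfolding seteq by (rule SideD7[OF SY])
  qed
  have relY: "\<forall>u\<in>Y. Q u = \<psi> (Q1 u)"
  proof
    fix u assume u: "u \<in> Y"
    then have "u \<in> VG \<inter> Q1 -` A1" using side_XVG[OF SY1] by auto
    then show "Q u = \<psi> (Q1 u)" using Q1(2) gl(6) by auto
  qed
  have relX: "\<forall>u\<in>X. P u = \<psi> (k u)" using fac side_XVG[OF SX] by auto
  have meshX: "mesh X k \<epsilon>" unfolding mesh_def
  proof (intro ballI impI)
    fix u v assume uv: "u \<in> X" "v \<in> X" "k u = k v"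
    then have "u \<in> VG" "v \<in> VG" using side_XVG[OF SX] by auto
    then have "dist u v < min \<epsilon> \<delta>" using kdist uv(3) by blast
    then show "dist u v < \<epsilon>" by simp
  qed
  show ?thesis using SX1 SY1 relX relY meshX by blast
qed

lemma mesh_mono:
  assumes "mesh X P1 e" "\<forall>u\<in>X. P1 u = g (P2 u)"
  shows "mesh X P2 e"
  using assms unfolding mesh_def by metis

lemma step:
  assumes SX: "Side X P D ED A EA" and SY: "Side Y Q D' ED' A EA" and e: "\<epsilon> > 0"
  shows "\<exists>P2 D2 ED2 Q2 D2' ED2' A2 EA2 g. Side X P2 D2 ED2 A2 EA2 \<and> Side Y Q2 D2' ED2' A2 EA2
    \<and> (\<forall>u\<in>X. P u = g (P2 u)) \<and> (\<forall>u\<in>Y. Q u = g (Q2 u)) \<and> mesh X P2 \<epsilon> \<and> mesh Y Q2 \<epsilon>"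
proof -
  obtain P1 D1 ED1 Q1 D1' ED1' A1 EA1 \<psi>1 where r1: "Side X P1 D1 ED1 A1 EA1" "Side Y Q1 D1' ED1' A1 EA1"
    "\<forall>u\<in>X. P u = \<psi>1 (P1 u)" "\<forall>u\<in>Y. Q u = \<psi>1 (Q1 u)" "mesh X P1 \<epsilon>"
    using refine[OF SX SY e] by blast
  obtain Q2 D2' ED2' P2 D2 ED2 A2 EA2 \<psi>2 where r2: "Side Y Q2 D2' ED2' A2 EA2" "Side X P2 D2 ED2 A2 EA2"
    "\<forall>u\<in>Y. Q1 u = \<psi>2 (Q2 u)" "\<forall>u\<in>X. P1 u = \<psi>2 (P2 u)" "mesh Y Q2 \<epsilon>"
    using refine[OF r1(2) r1(1) e] by blast
  have "\<forall>u\<in>X. P u = (\<psi>1 \<circ> \<psi>2) (P2 u)" using r1(3) r2(4) by simp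
  moreover have "\<forall>u\<in>Y. Q u = (\<psi>1 \<circ> \<psi>2) (Q2 u)" using r1(4) r2(3) by simp
  moreover have "mesh X P2 \<epsilon>" using mesh_mono[of X P1 \<epsilon> \<psi>2 P2] r1(5) r2(4) by blast
  ultimately show ?thesis using r2(1,2,5) by blast
qed

end


lemma fib_refine:
  assumes nq: "\<forall>n. \<forall>z\<in>Y. q n z = g n (q (Suc n) z)" and zw: "z \<in> Y" "w \<in> Y"
  shows "q (m + k) z = q (m + k) w \<Longrightarrow> q m z = q m w"
proof (induction k)
  case 0 then show ?case by simp
next
  case (Suc k)
  have "q (m + k) z = g (m + k) (q (Suc (m + k)) z)" using nq zw by blast
  also have "\<dots> = g (m + k) (q (Suc (m + k)) w)" using Suc.prems by simp
  also have "\<dots> = q (m + k) w" using nq zw by metis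
  finally show ?case using Suc.IH by simp
qed

lemma fib_refine':
  assumes nq: "\<forall>n. \<forall>z\<in>Y. q n z = g n (q (Suc n) z)" and zw: "z \<in> Y" "w \<in> Y" "m \<le> n" "q n z = q n w"
  shows "q m z = q m w"
proof -
  obtain k where "n = m + k" using zw(3) le_Suc_ex by blast
  then show ?thesis using fib_refine[OF nq zw(1,2)] zw(4) by blast
qed

lemma mesh_ev:
  fixes Y :: "'a::metric_space set"
  assumes nq: "\<forall>n. \<forall>z\<in>Y. q n z = g n (q (Suc n) z)"
    and mq: "\<forall>e>0. \<exists>n. \<forall>z\<in>Y. \<forall>w\<in>Y. q n z = q n w \<longrightarrow> dist z w < e"
    and e: "e > 0"
  shows "\<exists>N. \<forall>n\<ge>N. \<forall>z\<in>Y. \<forall>w\<in>Y. q n z = q n w \<longrightarrow> dist z w < e"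
proof -
  obtain N where N: "\<forall>z\<in>Y. \<forall>w\<in>Y. q N z = q N w \<longrightarrow> dist z w < e" using mq[rule_format, OF e] by blast
  have "\<forall>n\<ge>N. \<forall>z\<in>Y. \<forall>w\<in>Y. q n z = q n w \<longrightarrow> dist z w < e"
  proof (intro allI impI ballI)
    fix n z w assume "N \<le> n" "z \<in> Y" "w \<in> Y" "q n z = q n w"
    then have "q N z = q N w" using fib_refine'[OF nq] by blast
    then show "dist z w < e" using N \<open>z \<in> Y\<close> \<open>w \<in> Y\<close> by blast
  qed
  then show ?thesis by blast
qed

lemma eq_by_mesh:
  fixes Y :: "'a::metric_space set"
  assumes mq: "\<forall>e>0. \<exists>n. \<forall>z\<in>Y. \<forall>w\<in>Y. q n z = q n w \<longrightarrow> dist z w < e"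
    and zw: "z \<in> Y" "w \<in> Y" "\<forall>n. q n z = q n w"
  shows "z = w"
proof (rule ccontr)
  assume "z \<noteq> w"
  then have "dist z w > 0" by simp
  then obtain n where n: "\<forall>z'\<in>Y. \<forall>w'\<in>Y. q n z' = q n w' \<longrightarrow> dist z' w' < dist z w"
    using mq[rule_format, of "dist z w"] by blast
  then have "dist z w < dist z w" using zw by blast
  then show False by simp
qed

lemma iso_half:
  fixes X Y :: "'a::metric_space set"
  assumes cY: "compact Y"
    and surj: "\<forall>n. \<forall>u\<in>X. \<exists>z\<in>Y. q n z = p n u"
    and nq: "\<forall>n. \<forall>z\<in>Y. q n z = g n (q (Suc n) z)"
    and np: "\<forall>n. \<forall>u\<in>X. p n u = g n (p (Suc n) u)"
    and clq: "\<forall>n a. closed (Y \<inter> q n -` {a})"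
    and mq: "\<forall>e>0. \<exists>n. \<forall>z\<in>Y. \<forall>w\<in>Y. q n z = q n w \<longrightarrow> dist z w < e"
    and u: "u \<in> X"
  shows "\<exists>!z. z \<in> Y \<and> (\<forall>n. q n z = p n u)"
proof -
  define S where "S n = Y \<inter> q n -` {p n u}" for n
  have Sne: "S n \<noteq> {}" for n using surj u unfolding S_def by blast
  have Ssuc: "S (Suc n) \<subseteq> S n" for n
  proof
    fix z assume "z \<in> S (Suc n)"
    then have z: "z \<in> Y" "q (Suc n) z = p (Suc n) u" unfolding S_def by auto
    have "q n z = g n (q (Suc n) z)" using nq z(1) by blast
    also have "\<dots> = p n u" using z(2) np u by metis
    finally show "z \<in> S n" using z(1) unfolding S_def by simp
  qed
  have Smono': "S n \<subseteq> S m" if "m \<le> n" for m n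
    by (rule lift_Suc_antimono_le[of S, OF Ssuc that])
  have "Y \<inter> \<Inter>(range S) \<noteq> {}"
  proof (rule compact_imp_fip[OF cY])
    show "closed T" if "T \<in> range S" for T using that clq unfolding S_def by auto
    fix F' assume F': "finite F'" "F' \<subseteq> range S"
    then obtain I where I: "finite I" "F' = S ` I" by (metis finite_subset_image)
    define N where "N = (if I = {} then 0 else Max I)"
    have "S N \<subseteq> T" if TF: "T \<in> F'" for T
    proof -
      obtain i where i: "i \<in> I" "T = S i" using TF I(2) by blast
      have "i \<le> N" unfolding N_def using i(1) I(1) by auto
      then show ?thesis using Smono' i(2) by simp
    qed
    moreover have "S N \<subseteq> Y" unfolding S_def by auto
    ultimately have "S N \<subseteq> Y \<inter> \<Inter>F'" by blast
    then show "Y \<inter> \<Inter>F' \<noteq> {}" using Sne[of N] by blast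
  qed
  then obtain z where z: "z \<in> Y" "\<forall>n. z \<in> S n" by blast
  then have zq: "\<forall>n. q n z = p n u" unfolding S_def by simp
  show ?thesis
  proof (rule ex1I[of _ z])
    show "z \<in> Y \<and> (\<forall>n. q n z = p n u)" using z(1) zq by simp
    fix w assume w: "w \<in> Y \<and> (\<forall>n. q n w = p n u)"
    show "w = z" by (rule eq_by_mesh[OF mq]) (use w z(1) zq in auto)
  qed
qed

lemma edge_lim:
  fixes Y :: "'a::metric_space set"
  assumes cl: "closed EY" and EY: "EY \<subseteq> Y \<times> Y"
    and nq: "\<forall>n. \<forall>z\<in>Y. q n z = g n (q (Suc n) z)"
    and mq: "\<forall>e>0. \<exists>n. \<forall>z\<in>Y. \<forall>w\<in>Y. q n z = q n w \<longrightarrow> dist z w < e"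
    and ab: "a \<in> Y" "b \<in> Y"
    and ed: "\<forall>n. \<exists>z w. (z, w) \<in> EY \<and> q n z = q n a \<and> q n w = q n b"
  shows "(a, b) \<in> EY"
proof -
  obtain zs ws where zw: "\<forall>n. (zs n, ws n) \<in> EY \<and> q n (zs n) = q n a \<and> q n (ws n) = q n b"
    using ed by metis
  have inY: "zs n \<in> Y" "ws n \<in> Y" for n using zw EY by auto
  have lz: "zs \<longlonglongrightarrow> a"
    unfolding tendsto_iff eventually_sequentially
  proof (intro allI impI)
    fix e :: real assume "e > 0"
    then obtain N where N: "\<forall>n\<ge>N. \<forall>z\<in>Y. \<forall>w\<in>Y. q n z = q n w \<longrightarrow> dist z w < e"
      using mesh_ev[OF nq mq] by blast
    show "\<exists>N. \<forall>n\<ge>N. dist (zs n) a < e" using N zw inY ab by blast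
  qed
  have lw: "ws \<longlonglongrightarrow> b"
    unfolding tendsto_iff eventually_sequentially
  proof (intro allI impI)
    fix e :: real assume "e > 0"
    then obtain N where N: "\<forall>n\<ge>N. \<forall>z\<in>Y. \<forall>w\<in>Y. q n z = q n w \<longrightarrow> dist z w < e"
      using mesh_ev[OF nq mq] by blast
    show "\<exists>N. \<forall>n\<ge>N. dist (ws n) b < e" using N zw inY ab by blast
  qed
  have lim: "(\<lambda>n. (zs n, ws n)) \<longlonglongrightarrow> (a, b)" using tendsto_Pair[OF lz lw] .
  have "\<And>n. (zs n, ws n) \<in> EY" using zw by blast
  then show ?thesis using closed_sequentially[OF cl _ lim] by blast
qed



lemma iso_limit:
  fixes X Y :: "'a::metric_space set"
  assumes cX: "compact X" and cY: "compact Y" and clX: "closed EXX" and clY: "closed EYY"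
    and EXX: "EXX \<subseteq> X \<times> X" and EYY: "EYY \<subseteq> Y \<times> Y"
    and sXY: "\<forall>n. \<forall>u\<in>X. \<exists>z\<in>Y. q n z = p n u"
    and sYX: "\<forall>n. \<forall>z\<in>Y. \<exists>u\<in>X. p n u = q n z"
    and np: "\<forall>n. \<forall>u\<in>X. p n u = g n (p (Suc n) u)"
    and nq: "\<forall>n. \<forall>z\<in>Y. q n z = g n (q (Suc n) z)"
    and clp: "\<forall>n a. closed (X \<inter> p n -` {a})"
    and clq: "\<forall>n a. closed (Y \<inter> q n -` {a})"
    and op: "\<forall>n a. openin (top_of_set X) (X \<inter> p n -` {a})"
    and mp: "\<forall>e>0. \<exists>n. \<forall>z\<in>X. \<forall>w\<in>X. p n z = p n w \<longrightarrow> dist z w < e"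
    and mq: "\<forall>e>0. \<exists>n. \<forall>z\<in>Y. \<forall>w\<in>Y. q n z = q n w \<longrightarrow> dist z w < e"
    and eXY: "\<forall>n u v. (u, v) \<in> EXX \<longrightarrow> (\<exists>z w. (z, w) \<in> EYY \<and> q n z = p n u \<and> q n w = p n v)"
    and eYX: "\<forall>n z w. (z, w) \<in> EYY \<longrightarrow> (\<exists>u v. (u, v) \<in> EXX \<and> p n u = q n z \<and> p n v = q n w)"
  shows "\<exists>h. isomorphism (top_of_set X) EXX (top_of_set Y) EYY h"
proof -
  have H1: "\<exists>!z. z \<in> Y \<and> (\<forall>n. q n z = p n u)" if "u \<in> X" for u
    by (rule iso_half[OF cY sXY nq np clq mq that])
  have H2: "\<exists>!u. u \<in> X \<and> (\<forall>n. p n u = q n z)" if "z \<in> Y" for z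
    by (rule iso_half[OF cX sYX np nq clp mp that])
  define h where "h u = (THE z. z \<in> Y \<and> (\<forall>n. q n z = p n u))" for u
  define h' where "h' z = (THE u. u \<in> X \<and> (\<forall>n. p n u = q n z))" for z
  have hY: "h u \<in> Y" "\<forall>n. q n (h u) = p n u" if "u \<in> X" for u
    using theI'[OF H1[OF that]] unfolding h_def by simp_all
  have h'X: "h' z \<in> X" "\<forall>n. p n (h' z) = q n z" if "z \<in> Y" for z
    using theI'[OF H2[OF that]] unfolding h'_def by simp_all
  have hh': "h (h' z) = z" if z: "z \<in> Y" for z
  proof -
    have "h (h' z) \<in> Y" "\<forall>n. q n (h (h' z)) = p n (h' z)" using hY h'X[OF z] by simp_all
    then have "\<forall>n. q n (h (h' z)) = q n z" using h'X[OF z] by simp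
    then show ?thesis using eq_by_mesh[OF mq] \<open>h (h' z) \<in> Y\<close> z by blast
  qed
  have inj: "inj_on h X"
  proof (rule inj_onI)
    fix u v assume uv: "u \<in> X" "v \<in> X" "h u = h v"
    then have "\<forall>n. p n u = p n v" using hY by metis
    then show "u = v" using eq_by_mesh[OF mp] uv(1,2) by blast
  qed
  have himg: "h ` X = Y"
  proof
    show "h ` X \<subseteq> Y" using hY by auto
    show "Y \<subseteq> h ` X"
    proof
      fix z assume z: "z \<in> Y"
      then have "z = h (h' z)" using hh' by simp
      then show "z \<in> h ` X" using h'X(1)[OF z] by blast
    qed
  qed
  have hedge: "(h u, h v) \<in> EYY" if uv: "(u, v) \<in> EXX" for u v
  proof -
    have uvX: "u \<in> X" "v \<in> X" using uv EXX by auto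
    show ?thesis
    proof (rule edge_lim[OF clY EYY nq mq hY(1)[OF uvX(1)] hY(1)[OF uvX(2)]])
      show "\<forall>n. \<exists>z w. (z, w) \<in> EYY \<and> q n z = q n (h u) \<and> q n w = q n (h v)"
        using eXY uv hY(2)[OF uvX(1)] hY(2)[OF uvX(2)] by metis
    qed
  qed
  have h'edge: "(h' z, h' w) \<in> EXX" if zw: "(z, w) \<in> EYY" for z w
  proof -
    have zwY: "z \<in> Y" "w \<in> Y" using zw EYY by auto
    show ?thesis
    proof (rule edge_lim[OF clX EXX np mp h'X(1)[OF zwY(1)] h'X(1)[OF zwY(2)]])
      show "\<forall>n. \<exists>u v. (u, v) \<in> EXX \<and> p n u = p n (h' z) \<and> p n v = p n (h' w)"
        using eYX zw h'X(2)[OF zwY(1)] h'X(2)[OF zwY(2)] by metis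
    qed
  qed
  have cont: "continuous_on X h"
    unfolding continuous_on_iff
  proof (intro ballI allI impI)
    fix u and e :: real assume u: "u \<in> X" and e: "e > 0"
    obtain N where N: "\<forall>z\<in>Y. \<forall>w\<in>Y. q N z = q N w \<longrightarrow> dist z w < e" using mq[rule_format, OF e] by blast
    have "openin (top_of_set X) (X \<inter> p N -` {p N u})" using op by blast
    moreover have "u \<in> X \<inter> p N -` {p N u}" using u by simp
    ultimately obtain d where d: "d > 0" "\<forall>x'\<in>X. dist x' u < d \<longrightarrow> x' \<in> X \<inter> p N -` {p N u}"
      unfolding openin_euclidean_subtopology_iff by blast
    have "\<forall>x'\<in>X. dist x' u < d \<longrightarrow> dist (h x') (h u) < e"
    proof (intro ballI impI)
      fix x' assume x': "x' \<in> X" "dist x' u < d"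
      then have "p N x' = p N u" using d(2) by auto
      then have "q N (h x') = q N (h u)" using hY(2) x'(1) u by metis
      then show "dist (h x') (h u) < e" using N hY(1) x'(1) u by blast
    qed
    then show "\<exists>d>0. \<forall>x'\<in>X. dist x' u < d \<longrightarrow> dist (h x') (h u) < e" using d(1) by blast
  qed
  have cm: "continuous_map (top_of_set X) (top_of_set Y) h"
    unfolding continuous_map_in_subtopology using cont hY(1) by simp
  have eimg: "(\<lambda>(a, b). (h a, h b)) ` EXX = EYY"
  proof
    show "(\<lambda>(a, b). (h a, h b)) ` EXX \<subseteq> EYY" using hedge by auto
    show "EYY \<subseteq> (\<lambda>(a, b). (h a, h b)) ` EXX"
    proof
      fix e assume e: "e \<in> EYY"
      obtain z w where zw: "e = (z, w)" by (cases e)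
      have zwY: "z \<in> Y" "w \<in> Y" using e zw EYY by auto
      have "(h' z, h' w) \<in> EXX" using h'edge e zw by simp
      moreover have "(h (h' z), h (h' w)) = e" using hh' zwY zw by simp
      ultimately show "e \<in> (\<lambda>(a, b). (h a, h b)) ` EXX" by force
    qed
  qed
  have "isomorphism (top_of_set X) EXX (top_of_set Y) EYY h"
    unfolding isomorphism_def epimorphism_def
    using cm himg hedge eimg inj by simp
  then show ?thesis by blast
qed



lemma dconn_singleton: "dconn E {v}"
  using gconnected_discrete[of "{v}" "{v}" E] gconnected_singleton[of "discrete_topology {v}" E v] by simp

context FL begin

lemma inv_props:
  assumes SX: "Side X P D ED A EA" and SY: "Side VG Q D' ED' A EA"
  shows "\<forall>u\<in>X. \<exists>z\<in>VG. Q z = P u" "\<forall>z\<in>VG. \<exists>u\<in>X. P u = Q z"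
    "\<forall>a. closed (X \<inter> P -` {a})" "\<forall>a. closed (VG \<inter> Q -` {a})"
    "\<forall>a. openin (top_of_set X) (X \<inter> P -` {a})"
    "\<forall>u v. (u, v) \<in> EG \<inter> X \<times> X \<longrightarrow> (\<exists>z w. (z, w) \<in> EG \<and> Q z = P u \<and> Q w = P v)"
    "\<forall>z w. (z, w) \<in> EG \<longrightarrow> (\<exists>u v. (u, v) \<in> EG \<inter> X \<times> X \<and> P u = Q z \<and> P v = Q w)"
proof -
  have PX: "P ` X = A" by (rule side_image[OF SX])
  have QY: "Q ` VG = A" by (rule side_image[OF SY])
  have XVG: "X \<subseteq> VG" "X \<subseteq> VG \<inter> P -` A" using side_XVG[OF SX] by auto
  have QA: "\<forall>z\<in>VG. Q z \<in> A" using side_XVG[OF SY] by auto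
  show "\<forall>u\<in>X. \<exists>z\<in>VG. Q z = P u"
  proof
    fix u assume "u \<in> X"
    then have "P u \<in> Q ` VG" using PX QY by blast
    then show "\<exists>z\<in>VG. Q z = P u" by (metis imageE)
  qed
  show "\<forall>z\<in>VG. \<exists>u\<in>X. P u = Q z"
  proof
    fix z assume "z \<in> VG"
    then have "Q z \<in> P ` X" using PX QY by blast
    then show "\<exists>u\<in>X. P u = Q z" by (metis imageE)
  qed
  have cX: "closed X" by (rule side_closed[OF SX])
  show "\<forall>a. closed (X \<inter> P -` {a})"
  proof
    fix a
    have "X \<inter> P -` {a} = X \<inter> (VG \<inter> P -` {a})" using XVG by auto
    then show "closed (X \<inter> P -` {a})" using closed_Int[OF cX conf_closed[OF SideD1[OF SX]]] by simp
  qed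
  show "\<forall>a. closed (VG \<inter> Q -` {a})" using conf_closed[OF SideD1[OF SY]] by blast
  show "\<forall>a. openin (top_of_set X) (X \<inter> P -` {a})"
  proof
    fix a
    obtain T where T: "open T" "VG \<inter> P -` {a} = VG \<inter> T"
      using conf_openin[OF SideD1[OF SX], of "{a}"] unfolding openin_open by blast
    have "X \<inter> P -` {a} = X \<inter> T" using T(2) XVG(1) by (auto simp: set_eq_iff)
    then show "openin (top_of_set X) (X \<inter> P -` {a})" unfolding openin_open using T(1) by blast
  qed
  show "\<forall>u v. (u, v) \<in> EG \<inter> X \<times> X \<longrightarrow> (\<exists>z w. (z, w) \<in> EG \<and> Q z = P u \<and> Q w = P v)"
  proof (intro allI impI)
    fix u v assume uv: "(u, v) \<in> EG \<inter> X \<times> X"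
    have "(P u, P v) \<in> ED" using conf_edge[OF SideD1[OF SX]] uv by blast
    moreover have "P u \<in> A" "P v \<in> A" using uv XVG(2) by auto
    ultimately have "(P u, P v) \<in> EA" using SideD4[OF SX] by simp
    then obtain z w where "z \<in> VG" "w \<in> VG" "(z, w) \<in> EG" "Q z = P u" "Q w = P v"
      using side_edges[OF SY] by blast
    then show "\<exists>z w. (z, w) \<in> EG \<and> Q z = P u \<and> Q w = P v" by blast
  qed
  show "\<forall>z w. (z, w) \<in> EG \<longrightarrow> (\<exists>u v. (u, v) \<in> EG \<inter> X \<times> X \<and> P u = Q z \<and> P v = Q w)"
  proof (intro allI impI)
    fix z w assume zw: "(z, w) \<in> EG"
    have "(Q z, Q w) \<in> ED'" using conf_edge[OF SideD1[OF SY]] zw by blast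
    moreover have "z \<in> VG" "w \<in> VG" using zw EG_sub by auto
    then have "Q z \<in> A" "Q w \<in> A" using QA by auto
    ultimately have "(Q z, Q w) \<in> EA" using SideD4[OF SY] by simp
    then obtain u v where "u \<in> X" "v \<in> X" "(u, v) \<in> EG" "P u = Q z" "P v = Q w"
      using side_edges[OF SX] by blast
    then show "\<exists>u v. (u, v) \<in> EG \<inter> X \<times> X \<and> P u = Q z \<and> P v = Q w" by blast
  qed
qed

lemma sub_tg:
  assumes XVG: "X \<subseteq> VG" and cX: "closed X"
  shows "topological_graph X (EG \<inter> X \<times> X)"
  unfolding topological_graph_def
proof (intro conjI)
  show "graph X (EG \<inter> X \<times> X)" unfolding graph_def using XVG EG_refl EG_sym by auto
  have "compact (VG \<inter> X)" using compact_Int_closed[OF VG_compact cX] .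
  then show "compact X" using XVG by (simp add: Int_absorb1)
  have sub: "subtopology (top_of_set VG) X = top_of_set X" using XVG by (simp add: subtopology_subtopology Int_absorb1)
  have "second_countable (top_of_set VG)" using tg unfolding topological_graph_def by (elim conjE)
  then show "second_countable (top_of_set X)" using second_countable_subtopology[of "top_of_set VG" X] sub by simp
  have zd: "zero_dim (top_of_set VG)" using tg unfolding topological_graph_def by (elim conjE)
  show "zero_dim (top_of_set X)" unfolding zero_dim_def
  proof (intro allI impI, elim conjE)
    fix x U' assume U': "openin (top_of_set X) U'" and x: "x \<in> U'"
    obtain T where T: "open T" "U' = X \<inter> T" using U' unfolding openin_open by blast
    have "openin (top_of_set VG) (VG \<inter> T)" unfolding openin_open using T(1) by blast
    moreover have "x \<in> VG \<inter> T" using x T(2) XVG by auto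
    ultimately obtain C where C: "openin (top_of_set VG) C" "closedin (top_of_set VG) C" "x \<in> C" "C \<subseteq> VG \<inter> T"
      using zd unfolding zero_dim_def by blast
    obtain T1 where T1: "open T1" "C = VG \<inter> T1" using C(1) unfolding openin_open by blast
    obtain T2 where T2: "closed T2" "C = VG \<inter> T2" using C(2) unfolding closedin_closed by blast
    have e1: "X \<inter> C = X \<inter> T1" using T1(2) XVG by auto
    have e2: "X \<inter> C = X \<inter> T2" using T2(2) XVG by auto
    have "openin (top_of_set X) (X \<inter> C)" unfolding e1 openin_open using T1(1) by blast
    moreover have "closedin (top_of_set X) (X \<inter> C)" unfolding e2 closedin_closed using T2(1) by blast
    moreover have "x \<in> X \<inter> C" using x T(2) C(3) by auto
    moreover have "X \<inter> C \<subseteq> U'" using C(4) T(2) by auto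
    ultimately show "\<exists>C. openin (top_of_set X) C \<and> closedin (top_of_set X) C \<and> x \<in> C \<and> C \<subseteq> U'" by blast
  qed
  show "closed (EG \<inter> X \<times> X)" using closed_Int[OF EG_closed closed_Times[OF cX cX]] .
qed

definition Inv :: "'a set \<Rightarrow> ('a \<Rightarrow> nat) \<times> ('a \<Rightarrow> nat) \<Rightarrow> bool" where
  "Inv X s \<longleftrightarrow> (\<exists>D ED D' ED' A EA. Side X (fst s) D ED A EA \<and> Side VG (snd s) D' ED' A EA)"

lemma iso_from_side:
  assumes SX0: "Side X P0 D0 ED0 A0 EA0" and SY0: "Side VG Q0 D0' ED0' A0 EA0"
  shows "\<exists>h. isomorphism (top_of_set X) (EG \<inter> X \<times> X) (top_of_set VG) EG h"
proof -
  define R where "R n s s' \<longleftrightarrow> (\<exists>g. (\<forall>u\<in>X. fst s u = g (fst s' u)) \<and> (\<forall>u\<in>VG. snd s u = g (snd s' u)))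
      \<and> mesh X (fst s') (inverse (real (Suc n))) \<and> mesh VG (snd s') (inverse (real (Suc n)))"
    for n :: nat and s s' :: "('a \<Rightarrow> nat) \<times> ('a \<Rightarrow> nat)"
  have "\<exists>F. \<forall>n. Inv X (F n) \<and> R n (F n) (F (Suc n))"
  proof (rule dependent_nat_choice)
    have "Inv X (P0, Q0)" unfolding Inv_def fst_conv snd_conv using SX0 SY0 by blast
    then show "\<exists>s. Inv X s" by blast
    fix s n assume "Inv X s"
    then obtain D ED D' ED' A EA where S: "Side X (fst s) D ED A EA" "Side VG (snd s) D' ED' A EA"
      unfolding Inv_def by blast
    have "inverse (real (Suc n)) > 0" by simp
    from step[OF S this] obtain P2 D2 ED2 Q2 D2' ED2' A2 EA2 g where st:
      "Side X P2 D2 ED2 A2 EA2" "Side VG Q2 D2' ED2' A2 EA2"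
      "\<forall>u\<in>X. fst s u = g (P2 u)" "\<forall>u\<in>VG. snd s u = g (Q2 u)"
      "mesh X P2 (inverse (real (Suc n)))" "mesh VG Q2 (inverse (real (Suc n)))" by blast
    have "Inv X (P2, Q2)" unfolding Inv_def fst_conv snd_conv using st(1,2) by blast
    moreover have "R n s (P2, Q2)" unfolding R_def fst_conv snd_conv using st(3-6) by blast
    ultimately show "\<exists>y. Inv X y \<and> R n s y" by blast
  qed
  then obtain F where F: "\<forall>n. Inv X (F n)" "\<forall>n. R n (F n) (F (Suc n))" by blast
  define p where "p n = fst (F n)" for n
  define q where "q n = snd (F n)" for n
  have "\<forall>n. \<exists>g. (\<forall>u\<in>X. p n u = g (p (Suc n) u)) \<and> (\<forall>u\<in>VG. q n u = g (q (Suc n) u))"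
    using F(2) unfolding R_def p_def q_def by blast
  then obtain gs where gs: "\<forall>n. (\<forall>u\<in>X. p n u = gs n (p (Suc n) u)) \<and> (\<forall>u\<in>VG. q n u = gs n (q (Suc n) u))"
    by metis
  have meshes: "mesh X (p (Suc n)) (inverse (real (Suc n)))" "mesh VG (q (Suc n)) (inverse (real (Suc n)))" for n
    using F(2) unfolding R_def p_def q_def by auto
  have IP: "\<exists>D ED D' ED' A EA. Side X (p n) D ED A EA \<and> Side VG (q n) D' ED' A EA" for n
    using F(1) unfolding Inv_def p_def q_def by blast
  have P1: "\<forall>u\<in>X. \<exists>z\<in>VG. q n z = p n u" for n
  proof -
    obtain D ED D' ED' A EA where S: "Side X (p n) D ED A EA" "Side VG (q n) D' ED' A EA"
      using IP[of n] by blast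
    show ?thesis by (rule inv_props(1)[OF S])
  qed
  have P2: "\<forall>z\<in>VG. \<exists>u\<in>X. p n u = q n z" for n
  proof -
    obtain D ED D' ED' A EA where S: "Side X (p n) D ED A EA" "Side VG (q n) D' ED' A EA"
      using IP[of n] by blast
    show ?thesis by (rule inv_props(2)[OF S])
  qed
  have P3: "\<forall>a. closed (X \<inter> p n -` {a})" for n
  proof -
    obtain D ED D' ED' A EA where S: "Side X (p n) D ED A EA" "Side VG (q n) D' ED' A EA"
      using IP[of n] by blast
    show ?thesis by (rule inv_props(3)[OF S])
  qed
  have P4: "\<forall>a. closed (VG \<inter> q n -` {a})" for n
  proof -
    obtain D ED D' ED' A EA where S: "Side X (p n) D ED A EA" "Side VG (q n) D' ED' A EA"
      using IP[of n] by blast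
    show ?thesis by (rule inv_props(4)[OF S])
  qed
  have P5: "\<forall>a. openin (top_of_set X) (X \<inter> p n -` {a})" for n
  proof -
    obtain D ED D' ED' A EA where S: "Side X (p n) D ED A EA" "Side VG (q n) D' ED' A EA"
      using IP[of n] by blast
    show ?thesis by (rule inv_props(5)[OF S])
  qed
  have P6: "\<forall>u v. (u, v) \<in> EG \<inter> X \<times> X \<longrightarrow> (\<exists>z w. (z, w) \<in> EG \<and> q n z = p n u \<and> q n w = p n v)" for n
  proof -
    obtain D ED D' ED' A EA where S: "Side X (p n) D ED A EA" "Side VG (q n) D' ED' A EA"
      using IP[of n] by blast
    show ?thesis by (rule inv_props(6)[OF S])
  qed
  have P7: "\<forall>z w. (z, w) \<in> EG \<longrightarrow> (\<exists>u v. (u, v) \<in> EG \<inter> X \<times> X \<and> p n u = q n z \<and> p n v = q n w)" for n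
  proof -
    obtain D ED D' ED' A EA where S: "Side X (p n) D ED A EA" "Side VG (q n) D' ED' A EA"
      using IP[of n] by blast
    show ?thesis by (rule inv_props(7)[OF S])
  qed
  have cX: "closed X" using side_closed[OF SX0] .
  have XVG: "X \<subseteq> VG" using side_XVG[OF SX0] by auto
  have cpX: "compact X" using compact_Int_closed[OF VG_compact cX] XVG by (simp add: Int_absorb1)
  have mp: "\<forall>e>0. \<exists>n. \<forall>z\<in>X. \<forall>w\<in>X. p n z = p n w \<longrightarrow> dist z w < e"
  proof (intro allI impI)
    fix e :: real assume "e > 0"
    then obtain n where n: "inverse (real (Suc n)) < e" using reals_Archimedean by blast
    have "\<forall>z\<in>X. \<forall>w\<in>X. p (Suc n) z = p (Suc n) w \<longrightarrow> dist z w < e"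
      using meshes(1)[of n] n unfolding mesh_def by force
    then show "\<exists>n. \<forall>z\<in>X. \<forall>w\<in>X. p n z = p n w \<longrightarrow> dist z w < e" by blast
  qed
  have mq: "\<forall>e>0. \<exists>n. \<forall>z\<in>VG. \<forall>w\<in>VG. q n z = q n w \<longrightarrow> dist z w < e"
  proof (intro allI impI)
    fix e :: real assume "e > 0"
    then obtain n where n: "inverse (real (Suc n)) < e" using reals_Archimedean by blast
    have "\<forall>z\<in>VG. \<forall>w\<in>VG. q (Suc n) z = q (Suc n) w \<longrightarrow> dist z w < e"
      using meshes(2)[of n] n unfolding mesh_def by force
    then show "\<exists>n. \<forall>z\<in>VG. \<forall>w\<in>VG. q n z = q n w \<longrightarrow> dist z w < e" by blast
  qed
  show ?thesis
  proof (rule iso_limit[where p=p and q=q and g=gs])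
    show "compact X" by (rule cpX)
    show "compact VG" by (rule VG_compact)
    show "closed (EG \<inter> X \<times> X)" using closed_Int[OF EG_closed closed_Times[OF cX cX]] .
    show "closed EG" by (rule EG_closed)
    show "EG \<inter> X \<times> X \<subseteq> X \<times> X" by simp
    show "EG \<subseteq> VG \<times> VG" by (rule EG_sub)
    show "\<forall>n. \<forall>u\<in>X. \<exists>z\<in>VG. q n z = p n u" using P1 by blast
    show "\<forall>n. \<forall>z\<in>VG. \<exists>u\<in>X. p n u = q n z" using P2 by blast
    show "\<forall>n. \<forall>u\<in>X. p n u = gs n (p (Suc n) u)" using gs by blast
    show "\<forall>n. \<forall>z\<in>VG. q n z = gs n (q (Suc n) z)" using gs by blast
    show "\<forall>n a. closed (X \<inter> p n -` {a})" using P3 by blast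
    show "\<forall>n a. closed (VG \<inter> q n -` {a})" using P4 by blast
    show "\<forall>n a. openin (top_of_set X) (X \<inter> p n -` {a})" using P5 by blast
    show "\<forall>e>0. \<exists>n. \<forall>z\<in>X. \<forall>w\<in>X. p n z = p n w \<longrightarrow> dist z w < e" by (rule mp)
    show "\<forall>e>0. \<exists>n. \<forall>z\<in>VG. \<forall>w\<in>VG. q n z = q n w \<longrightarrow> dist z w < e" by (rule mq)
    show "\<forall>n u v. (u, v) \<in> EG \<inter> X \<times> X \<longrightarrow> (\<exists>z w. (z, w) \<in> EG \<and> q n z = p n u \<and> q n w = p n v)"
      using P6 by blast
    show "\<forall>n z w. (z, w) \<in> EG \<longrightarrow> (\<exists>u v. (u, v) \<in> EG \<inter> X \<times> X \<and> p n u = q n z \<and> p n v = q n w)"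
      using P7 by blast
  qed
qed

lemma main_FL:
  assumes x: "x \<in> VG" and U: "U \<subseteq> VG" and W: "openin (top_of_set VG) W" "x \<in> W" "W \<subseteq> U"
  shows "\<exists>V. x \<in> V \<and> V \<subseteq> U \<and> topological_graph V (EG \<inter> (V \<times> V))
           \<and> (\<exists>h. isomorphism (top_of_set V) (EG \<inter> (V \<times> V)) (top_of_set VG) EG h)"
proof -
  obtain \<epsilon> where e: "\<epsilon> > 0" "\<forall>x'\<in>VG. dist x' x < \<epsilon> \<longrightarrow> x' \<in> W"
    using W(1,2) unfolding openin_euclidean_subtopology_iff by blast
  obtain D0 ED0 P0 where P0: "finite_connected_graph D0 ED0" "confluent (top_of_set VG) EG (discrete_topology D0) ED0 P0"
    "\<forall>a\<in>D0. diameter (VG \<inter> P0 -` {a}) < \<epsilon>"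
    using ex3[OF e(1)] by blast
  define a0 where "a0 = P0 x"
  have a0D: "a0 \<in> D0" unfolding a0_def using conf_maps[OF P0(2) x] .
  have xS: "x \<in> VG \<inter> P0 -` {a0}" using x unfolding a0_def by simp
  define X where "X = comp (top_of_set VG) EG (VG \<inter> P0 -` {a0}) x"
  note Xc = comp_gcomponent[OF xS, of "top_of_set VG" EG, folded X_def]
  have E0: "{(a0, a0)} = ED0 \<inter> {a0} \<times> {a0}"
    using fcg_graph[OF P0(1)] a0D unfolding graph_def by auto
  have SX0: "Side X P0 D0 ED0 {a0} {(a0, a0)}"
    unfolding Side_def using P0(1,2) a0D E0 dconn_singleton Xc(1) by simp
  have fcg0: "finite_connected_graph {a0} {(a0, a0)}"
    unfolding finite_connected_graph_def graph_def
    using gconnected_discrete[of "{a0}" "{a0}" "{(a0, a0)}"] dconn_singleton by simp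
  obtain f0 where f0: "confluent (top_of_set VG) EG (discrete_topology {a0}) {(a0, a0)} f0"
    using ex1[OF fcg0] by blast
  have "VG \<inter> f0 -` {a0} = VG" using conf_maps[OF f0] by auto
  moreover have "gcomponent (top_of_set VG) EG VG VG"
    by (rule gcomponentI) (use G_connected in auto)
  ultimately have gc: "gcomponent (top_of_set VG) EG (VG \<inter> f0 -` {a0}) VG" by simp
  have SY0: "Side VG f0 {a0} {(a0, a0)} {a0} {(a0, a0)}"
    unfolding Side_def using f0 fcg0 dconn_singleton gc by auto
  have XVG: "X \<subseteq> VG" using side_XVG[OF SX0] by auto
  have XU: "X \<subseteq> U"
  proof
    fix u assume u: "u \<in> X"
    then have uS: "u \<in> VG \<inter> P0 -` {a0}" using Xc(1) gcomponentD(1) by blast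
    have "dist u x \<le> diameter (VG \<inter> P0 -` {a0})" by (rule diam_bound[OF uS xS])
    also have "\<dots> < \<epsilon>" using P0(3) a0D by blast
    finally have "u \<in> W" using e(2) uS by blast
    then show "u \<in> U" using W(3) by blast
  qed
  have "topological_graph X (EG \<inter> X \<times> X)" by (rule sub_tg[OF XVG side_closed[OF SX0]])
  moreover have "\<exists>h. isomorphism (top_of_set X) (EG \<inter> X \<times> X) (top_of_set VG) EG h"
    by (rule iso_from_side[OF SX0 SY0])
  ultimately show ?thesis using Xc(2) XU by blast
qed

end

theorem mainTheorem12:
  fixes VG :: "'a::metric_space set" and EG :: "('a \<times> 'a) set"
  assumes "is_Fraisse_limit VG EG"
    and "x \<in> VG"
    and "U \<subseteq> VG"
    and "\<exists>W. openin (top_of_set VG) W \<and> x \<in> W \<and> W \<subseteq> U"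
  shows "\<exists>V. x \<in> V \<and> V \<subseteq> U \<and> topological_graph V (EG \<inter> (V \<times> V))
           \<and> (\<exists>h. isomorphism (top_of_set V) (EG \<inter> (V \<times> V)) (top_of_set VG) EG h)"
proof -
  interpret FL VG EG using assms(1) by unfold_locales
  obtain W where W: "openin (top_of_set VG) W" "x \<in> W" "W \<subseteq> U" using assms(4) by blast
  show ?thesis by (rule main_FL[OF assms(2,3) W])
qed


end
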